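(* Let $\gamma\in[0,1)$, let the MDP, encoder $e_\phi$, latent-space model $m_\phi$ and latent policy $\pi_\phi$ be arbitrary (as described in the context), and let $K\in\mathbb{N}$. Define $$\mathcal{L}^K_\phi=\mathbb{E}_{q^K_\phi(\tau)}\left[\sum_{t=0}^{K-1}\gamma^t\,\tilde r(s_t,a_t,s_{t+1})+\gamma^K\log Q(s_K,a_K)\right],$$ where $$\tilde r(s_t,a_t,s_{t+1})=(1-\gamma)\log r(s_t,a_t)+\log e_\phi(z_{t+1}\mid s_{t+1})-\log m_\phi(z_{t+1}\mid z_t,a_t).$$ Then $$\frac{1}{1-\gamma}\exp\big(\mathcal{L}^K_\phi\big)\le \mathbb{E}_{p_\phi(\tau)}\left[\sum_{t=0}^{\infty}\gamma^t r(s_t,a_t)\right].$$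
   Context: An MDP has states $s$, actions $a$, initial state distribution $p_0(s)$, transition density $p(s_{t+1}\mid s_t,a_t)$, a nonnegative reward function $r(s,a)\ge 0$, and discount $\gamma\in[0,1)$ (conventions $\log 0=-\infty$, $\exp(-\infty)=0$). There is a latent (representation) space. An encoder $e_\phi(z\mid s)$ is a conditional density over representations $z$ given a state; a latent-space model $m_\phi(z_{t+1}\mid z_t,a_t)$ is a conditional density over next representations; a latent policy $\pi_\phi(a\mid z)$ is a conditional distribution over actions given a representation. Trajectories are $\tau=(s_0,a_0,z_0,s_1,a_1,z_1,\dots)$. The true trajectory distribution is $$p_\phi(\tau)=p_0(s_0)\prod_{t=0}^\infty p(s_{t+1}\mid s_t,a_t)\,\pi_\phi(a_t\mid z_t)\,e_\phi(z_t\mid s_t).$$ The Q-function is $Q(s,a)=\mathbb{E}_{p_\phi}\big[(1-\gamma)\sum_{t=0}^\infty\gamma^t r(s_t,a_t)\mid s_0=s,a_0=a\big]$ (trajectory continuing under $p$, $e_\phi$, $\pi_\phi$). The $K$-step model distribution is $$q^K_\phi(\tau)=p_0(s_0)\,e_\phi(z_0\mid s_0)\,\pi_\phi(a_0\mid z_0)\prod_{t=1}^K p(s_t\mid s_{t-1},a_{t-1})\,m_\phi(z_t\mid z_{t-1},a_{t-1})\,\pi_\phi(a_t\mid z_t),$$ i.e. states follow the true dynamics while representations after time $0$ are generated by the latent model and actions depend only on representations. *)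

theory Defs
  imports "HOL-Probability.Probability"
begin

text \<open>States have type 's (base measure Ms), actions 'a (measurable
space Ma), representations 'z (base measure Mz). Densities:
  p0 s        = p_0(s)             w.r.t. Ms
  p s a s'    = p(s' | s, a)       w.r.t. Ms
  e s z       = e_phi(z | s)       w.r.t. Mz
  m z a z'    = m_phi(z' | z, a)   w.r.t. Mz
The latent policy is a Markov kernel pol z :: 'a measure (pi_phi(. | z)).\<close>

definition eln :: "ennreal \<Rightarrow> ereal" where
  "eln x = (if x = 0 then -\<infinity> else if x = \<infinity> then \<infinity> else ereal (ln (enn2real x)))"

definition eexp :: "ereal \<Rightarrow> ennreal" where
  "eexp x = (if x = -\<infinity> then 0 else if x = \<infinity> then \<infinity> else ennreal (exp (real_of_ereal x)))"

definition lsum :: "ereal list \<Rightarrow> ereal" where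
  "lsum xs = (if -\<infinity> \<in> set xs then -\<infinity> else sum_list xs)"

definition sa_init ::
  "'s measure \<Rightarrow> 'a measure \<Rightarrow> 'z measure \<Rightarrow> ('s \<Rightarrow> real) \<Rightarrow> ('s \<Rightarrow> 'z \<Rightarrow> real)
   \<Rightarrow> ('z \<Rightarrow> 'a measure) \<Rightarrow> ('s \<times> 'a) measure" where
  "sa_init Ms Ma Mz p0 e pol =
     density Ms (\<lambda>s. ennreal (p0 s)) \<bind> (\<lambda>s.
     density Mz (\<lambda>z. ennreal (e s z)) \<bind> (\<lambda>z.
     pol z \<bind> (\<lambda>a. return (Ms \<Otimes>\<^sub>M Ma) (s, a))))"

definition sa_step ::
  "'s measure \<Rightarrow> 'a measure \<Rightarrow> 'z measure \<Rightarrow> ('s \<Rightarrow> 'a \<Rightarrow> 's \<Rightarrow> real) \<Rightarrow> ('s \<Rightarrow> 'z \<Rightarrow> real)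
   \<Rightarrow> ('z \<Rightarrow> 'a measure) \<Rightarrow> 's \<times> 'a \<Rightarrow> ('s \<times> 'a) measure" where
  "sa_step Ms Ma Mz p e pol x = (case x of (s, a) \<Rightarrow>
     density Ms (\<lambda>s'. ennreal (p s a s')) \<bind> (\<lambda>s'.
     density Mz (\<lambda>z'. ennreal (e s' z')) \<bind> (\<lambda>z'.
     pol z' \<bind> (\<lambda>a'. return (Ms \<Otimes>\<^sub>M Ma) (s', a')))))"

primrec sa_iter ::
  "'s measure \<Rightarrow> 'a measure \<Rightarrow> 'z measure \<Rightarrow> ('s \<Rightarrow> 'a \<Rightarrow> 's \<Rightarrow> real) \<Rightarrow> ('s \<Rightarrow> 'z \<Rightarrow> real)
   \<Rightarrow> ('z \<Rightarrow> 'a measure) \<Rightarrow> nat \<Rightarrow> 's \<times> 'a \<Rightarrow> ('s \<times> 'a) measure" where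
  "sa_iter Ms Ma Mz p e pol 0 x = return (Ms \<Otimes>\<^sub>M Ma) x"
| "sa_iter Ms Ma Mz p e pol (Suc n) x =
     sa_iter Ms Ma Mz p e pol n x \<bind> sa_step Ms Ma Mz p e pol"

text \<open>Q(s,a) = E[(1-gamma) sum_t gamma^t r(s_t,a_t) | s_0 = s, a_0 = a]
 (sum and expectation exchanged by Tonelli, r >= 0).\<close>
definition Qfun ::
  "real \<Rightarrow> ('s \<Rightarrow> 'a \<Rightarrow> real) \<Rightarrow> 's measure \<Rightarrow> 'a measure \<Rightarrow> 'z measure
   \<Rightarrow> ('s \<Rightarrow> 'a \<Rightarrow> 's \<Rightarrow> real) \<Rightarrow> ('s \<Rightarrow> 'z \<Rightarrow> real) \<Rightarrow> ('z \<Rightarrow> 'a measure)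
   \<Rightarrow> 's \<Rightarrow> 'a \<Rightarrow> ennreal" where
  "Qfun \<gamma> r Ms Ma Mz p e pol s a =
     ennreal (1 - \<gamma>) * (\<Sum>t. ennreal (\<gamma> ^ t) *
        (\<integral>\<^sup>+ y. ennreal (r (fst y) (snd y)) \<partial>(sa_iter Ms Ma Mz p e pol t (s, a))))"

text \<open>E_{p_phi}[sum_t gamma^t r(s_t,a_t)] (sum and expectation exchanged by Tonelli).\<close>
definition true_return ::
  "real \<Rightarrow> ('s \<Rightarrow> 'a \<Rightarrow> real) \<Rightarrow> 's measure \<Rightarrow> 'a measure \<Rightarrow> 'z measure \<Rightarrow> ('s \<Rightarrow> real)
   \<Rightarrow> ('s \<Rightarrow> 'a \<Rightarrow> 's \<Rightarrow> real) \<Rightarrow> ('s \<Rightarrow> 'z \<Rightarrow> real) \<Rightarrow> ('z \<Rightarrow> 'a measure) \<Rightarrow> ennreal" where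
  "true_return \<gamma> r Ms Ma Mz p0 p e pol =
     (\<Sum>t. ennreal (\<gamma> ^ t) *
        (\<integral>\<^sup>+ y. ennreal (r (fst y) (snd y))
           \<partial>(sa_init Ms Ma Mz p0 e pol \<bind> sa_iter Ms Ma Mz p e pol t)))"

primrec q_traj ::
  "'s measure \<Rightarrow> 'a measure \<Rightarrow> 'z measure \<Rightarrow> ('s \<Rightarrow> real) \<Rightarrow> ('s \<Rightarrow> 'a \<Rightarrow> 's \<Rightarrow> real)
   \<Rightarrow> ('s \<Rightarrow> 'z \<Rightarrow> real) \<Rightarrow> ('z \<Rightarrow> 'a \<Rightarrow> 'z \<Rightarrow> real) \<Rightarrow> ('z \<Rightarrow> 'a measure)
   \<Rightarrow> nat \<Rightarrow> (nat \<Rightarrow> 's \<times> 'z \<times> 'a) measure" where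
  "q_traj Ms Ma Mz p0 p e m pol 0 =
     density Ms (\<lambda>s. ennreal (p0 s)) \<bind> (\<lambda>s.
     density Mz (\<lambda>z. ennreal (e s z)) \<bind> (\<lambda>z.
     pol z \<bind> (\<lambda>a.
     return (PiM {..0} (\<lambda>_. Ms \<Otimes>\<^sub>M (Mz \<Otimes>\<^sub>M Ma))) (\<lambda>i\<in>{..0::nat}. (s, z, a)))))"
| "q_traj Ms Ma Mz p0 p e m pol (Suc k) =
     q_traj Ms Ma Mz p0 p e m pol k \<bind> (\<lambda>\<omega>. case \<omega> k of (s, z, a) \<Rightarrow>
     density Ms (\<lambda>s'. ennreal (p s a s')) \<bind> (\<lambda>s'.
     density Mz (\<lambda>z'. ennreal (m z a z')) \<bind> (\<lambda>z'.
     pol z' \<bind> (\<lambda>a'.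
     return (PiM {..Suc k} (\<lambda>_. Ms \<Otimes>\<^sub>M (Mz \<Otimes>\<^sub>M Ma))) (fun_upd \<omega> (Suc k) (s', z', a'))))))"

definition LK_integrand ::
  "real \<Rightarrow> ('s \<Rightarrow> 'a \<Rightarrow> real) \<Rightarrow> ('s \<Rightarrow> 'z \<Rightarrow> real) \<Rightarrow> ('z \<Rightarrow> 'a \<Rightarrow> 'z \<Rightarrow> real)
   \<Rightarrow> ('s \<Rightarrow> 'a \<Rightarrow> ennreal) \<Rightarrow> nat \<Rightarrow> (nat \<Rightarrow> 's \<times> 'z \<times> 'a) \<Rightarrow> ereal" where
  "LK_integrand \<gamma> r e m Q K \<omega> =
     (let st = (\<lambda>t. fst (\<omega> t)); zt = (\<lambda>t. fst (snd (\<omega> t))); act = (\<lambda>t. snd (snd (\<omega> t)))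
      in lsum (concat (map (\<lambda>t.
            [ ereal (\<gamma> ^ t * (1 - \<gamma>)) * eln (ennreal (r (st t) (act t))),
              ereal (\<gamma> ^ t) * eln (ennreal (e (st (Suc t)) (zt (Suc t)))),
              - (ereal (\<gamma> ^ t) * eln (ennreal (m (zt t) (act t) (zt (Suc t))))) ]) [0..<K])
          @ [ereal (\<gamma> ^ K) * eln (Q (st K) (act K))]))"

definition epos :: "'b measure \<Rightarrow> ('b \<Rightarrow> ereal) \<Rightarrow> ennreal" where
  "epos M f = (\<integral>\<^sup>+ x. e2ennreal (f x) \<partial>M)"

definition eneg :: "'b measure \<Rightarrow> ('b \<Rightarrow> ereal) \<Rightarrow> ennreal" where
  "eneg M f = (\<integral>\<^sup>+ x. e2ennreal (- f x) \<partial>M)"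

text \<open>Expectation of an extended-real function (meaningful when not both parts are infinite).\<close>
definition eexpect :: "'b measure \<Rightarrow> ('b \<Rightarrow> ereal) \<Rightarrow> ereal" where
  "eexpect M f = enn2ereal (epos M f) - enn2ereal (eneg M f)"

end

theory Submission
  imports Defs
begin


definition pw :: "ennreal \<Rightarrow> real \<Rightarrow> ennreal" where
  "pw x \<alpha> = eexp (ereal \<alpha> * eln x)"

lemma pw_eq:
  assumes "0 \<le> \<alpha>"
  shows "pw x \<alpha> = (if \<alpha> = 0 then 1 else if x = \<top> then \<top> else ennreal (enn2real x powr \<alpha>))"
proof (cases "\<alpha> = 0")
  case True then show ?thesis by (simp add: pw_def eexp_def zero_ereal_def)
next
  case False
  then have a: "\<alpha> > 0" using assms by auto
  show ?thesis
  proof (cases "x = 0")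
    case True then show ?thesis using a by (simp add: pw_def eexp_def eln_def)
  next
    case x0: False
    show ?thesis
    proof (cases "x = \<infinity>")
      case True then show ?thesis using a by (simp add: pw_def eexp_def eln_def)
    next
      case False
      then have "enn2real x > 0" using x0
        by (simp add: enn2real_positive_iff less_top[symmetric] zero_less_iff_neq_zero)
      then show ?thesis using a x0 False by (simp add: pw_def eexp_def eln_def powr_def)
    qed
  qed
qed

lemma pw_0[simp]: "pw x 0 = 1"
  by (simp add: pw_eq)

lemma pw_1[simp]: "pw x 1 = x"
  by (cases x) (auto simp: pw_eq)

lemma pw_one[simp]: "0 \<le> \<alpha> \<Longrightarrow> pw 1 \<alpha> = 1"
  by (simp add: pw_eq)

lemma pw_zero: "0 < \<alpha> \<Longrightarrow> pw 0 \<alpha> = 0"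
  by (simp add: pw_eq)

lemma pw_top: "0 < \<alpha> \<Longrightarrow> pw \<top> \<alpha> = \<top>"
  by (simp add: pw_eq)

lemma pw_ennreal: "0 < \<alpha> \<Longrightarrow> 0 \<le> x \<Longrightarrow> pw (ennreal x) \<alpha> = ennreal (x powr \<alpha>)"
  by (auto simp: pw_eq)

lemma pw_mono: "0 \<le> \<alpha> \<Longrightarrow> a \<le> b \<Longrightarrow> pw a \<alpha> \<le> pw b \<alpha>"
  apply (cases a; cases b)
  apply (auto simp: pw_eq top_unique intro!: ennreal_leI powr_mono2)
  done

lemma pw_mult: assumes "0 \<le> \<alpha>" shows "pw (a * b) \<alpha> = pw a \<alpha> * pw b \<alpha>"
proof (cases "\<alpha> = 0")
  case False
  then have a: "0 < \<alpha>" using assms by auto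
  show ?thesis
  proof (cases "a = 0 \<or> b = 0")
    case True then show ?thesis using a by (auto simp: pw_zero)
  next
    case nz: False
    show ?thesis
    proof (cases "a = \<infinity> \<or> b = \<infinity>")
      case True
      have "pw a \<alpha> \<noteq> 0" "pw b \<alpha> \<noteq> 0" using a nz
        by (auto simp: pw_eq enn2real_eq_0_iff)
      then show ?thesis using True a nz
        by (auto simp: pw_top ennreal_mult_eq_top_iff)
    next
      case False
      then obtain x y where xy: "a = ennreal x" "b = ennreal y" "0 \<le> x" "0 \<le> y"
        by (cases a; cases b) auto
      then show ?thesis using a by (simp add: pw_ennreal ennreal_mult[symmetric] powr_mult)
    qed
  qed
qed simp

lemma pw_pw: "0 \<le> \<alpha> \<Longrightarrow> 0 \<le> \<beta> \<Longrightarrow> pw (pw a \<alpha>) \<beta> = pw a (\<alpha> * \<beta>)"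
  apply (cases a)
  apply (auto simp: pw_eq powr_powr)
  done

lemma young_pw:
  assumes "0 \<le> \<alpha>" "\<alpha> \<le> 1"
  shows "pw a \<alpha> * pw b (1 - \<alpha>) \<le> ennreal \<alpha> * a + ennreal (1 - \<alpha>) * b"
proof -
  consider "\<alpha> = 0" | "\<alpha> = 1" | "0 < \<alpha>" "\<alpha> < 1" using assms by linarith
  then show ?thesis
  proof cases
    case 1 then show ?thesis by simp
  next
    case 2 then show ?thesis by simp
  next
    case 3
    show ?thesis
    proof (cases "a = 0 \<or> b = 0")
      case True then show ?thesis using 3 by (auto simp: pw_zero)
    next
      case nz: False
      show ?thesis
      proof (cases "a = \<infinity> \<or> b = \<infinity>")
        case True then show ?thesis using 3 nz
          by (auto simp: pw_top ennreal_mult_top ennreal_top_mult)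
      next
        case False
        then obtain x y where xy: "a = ennreal x" "b = ennreal y" "0 < x" "0 < y"
          using nz by (cases a; cases b) auto
        have "x powr \<alpha> * y powr (1 - \<alpha>) \<le> \<alpha> * x + (1 - \<alpha>) * y"
          using 3 xy by (intro Youngs_inequality_0) auto
        then show ?thesis using 3 xy
          by (simp add: pw_ennreal ennreal_mult[symmetric] ennreal_plus[symmetric] ennreal_leI del: ennreal_plus)
      qed
    qed
  qed
qed

lemma jensen_pw:
  assumes M: "prob_space M" and f[measurable]: "f \<in> borel_measurable M" and a: "0 \<le> \<alpha>" "\<alpha> \<le> 1"
  shows "(\<integral>\<^sup>+x. pw (f x) \<alpha> \<partial>M) \<le> pw (\<integral>\<^sup>+x. f x \<partial>M) \<alpha>"
proof (cases "\<alpha> = 0")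
  case True then show ?thesis using M by (simp add: prob_space.emeasure_space_1)
next
  case False
  then have a0: "0 < \<alpha>" using a by auto
  define c where "c = (\<integral>\<^sup>+x. f x \<partial>M)"
  consider "c = \<top>" | "c = 0" | c' where "c = ennreal c'" "0 < c'"
    by (cases c) (auto simp: ennreal_eq_0_iff less_le)
  then show ?thesis
  proof cases
    case 1 then show ?thesis using a0 by (simp add: c_def[symmetric] pw_top)
  next
    case 2
    then have "AE x in M. f x = 0" unfolding c_def by (simp add: nn_integral_0_iff_AE)
    then have "(\<integral>\<^sup>+x. pw (f x) \<alpha> \<partial>M) = (\<integral>\<^sup>+x. 0 \<partial>M)"
      by (intro nn_integral_cong_AE) (auto simp: pw_zero a0)
    then show ?thesis by simp
  next
    case 3
    have pt: "pw (f x) \<alpha> \<le> pw c \<alpha> * (ennreal \<alpha> * (f x * ennreal (1 / c')) + ennreal (1 - \<alpha>))" for x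
    proof -
      have "ennreal c' * ennreal (1 / c') = 1" using 3 by (simp add: ennreal_mult[symmetric])
      then have "f x = c * (f x * ennreal (1 / c'))" using 3
        by (metis mult.assoc mult.commute mult.right_neutral)
      then have "pw (f x) \<alpha> = pw c \<alpha> * (pw (f x * ennreal (1 / c')) \<alpha> * pw 1 (1 - \<alpha>))"
        using a by (metis mult.right_neutral pw_mult pw_one diff_ge_0_iff_ge)
      also have "\<dots> \<le> pw c \<alpha> * (ennreal \<alpha> * (f x * ennreal (1 / c')) + ennreal (1 - \<alpha>) * 1)"
        by (intro mult_left_mono young_pw a) auto
      finally show ?thesis by simp
    qed
    have "(\<integral>\<^sup>+x. pw (f x) \<alpha> \<partial>M) \<le> (\<integral>\<^sup>+x. pw c \<alpha> * (ennreal \<alpha> * (f x * ennreal (1 / c')) + ennreal (1 - \<alpha>)) \<partial>M)"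
      by (intro nn_integral_mono pt)
    also have "\<dots> = pw c \<alpha> * (ennreal \<alpha> * (c * ennreal (1 / c')) + ennreal (1 - \<alpha>))"
      using M by (simp add: nn_integral_cmult nn_integral_add nn_integral_multc c_def prob_space.emeasure_space_1)
    also have "\<dots> = pw c \<alpha>" using 3 a
      by (simp add: ennreal_mult[symmetric] ennreal_plus[symmetric] del: ennreal_plus)
    finally show ?thesis unfolding c_def .
  qed
qed

lemma eexp_measurable[measurable]: "eexp \<in> borel_measurable borel"
  unfolding eexp_def by measurable

lemma eln_measurable[measurable]: "eln \<in> borel_measurable borel"
  unfolding eln_def by measurable

lemma eexp_add: "x \<noteq> -\<infinity> \<Longrightarrow> y \<noteq> -\<infinity> \<Longrightarrow> eexp (x + y) = eexp x * eexp y"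
  by (cases x; cases y) (auto simp: eexp_def exp_add ennreal_mult' ennreal_top_mult ennreal_mult_top)

lemma eexp_sum_list: "-\<infinity> \<notin> set xs \<Longrightarrow> eexp (sum_list xs) = prod_list (map eexp xs)"
proof (induction xs)
  case Nil then show ?case by (simp add: eexp_def zero_ereal_def)
next
  case (Cons x xs)
  have "sum_list xs \<noteq> -\<infinity>" using Cons.prems
    by (induction xs) (auto simp: zero_ereal_def)
  moreover have "x \<noteq> -\<infinity>" using Cons.prems by auto
  ultimately show ?case using Cons by (simp add: eexp_add)
qed

lemma eexp_lsum: "eexp (lsum xs) = prod_list (map eexp xs)"
proof (cases "-\<infinity> \<in> set xs")
  case True
  then have "0 \<in> set (map eexp xs)" by (force simp: eexp_def)
  then have "prod_list (map eexp xs) = 0" by (simp add: prod_list_zero_iff)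
  then show ?thesis using True by (simp add: lsum_def eexp_def)
qed (simp add: lsum_def eexp_sum_list)

lemma eln_eexp[simp]: "eln (eexp x) = x"
  by (cases x) (auto simp: eln_def eexp_def)

lemma eexp_ge_e2ennreal: "e2ennreal y \<le> eexp y"
proof (cases y)
  case (real r)
  have "r \<le> exp r" using exp_ge_add_one_self[of r] by linarith
  then show ?thesis using real by (simp add: eexp_def ennreal_leI)
qed (auto simp: eexp_def e2ennreal_neg)

lemma exp_tangent_enn:
  fixes c :: real
  shows "ennreal (exp c) * (1 + e2ennreal y + ennreal (max (-c) 0))
     \<le> eexp y + ennreal (exp c) * (e2ennreal (-y) + ennreal (max c 0))"
proof (cases y)
  case (real r)
  have key: "exp c * (1 + (r - c)) \<le> exp r"
  proof -
    have "1 + (r - c) \<le> exp (r - c)" by (rule exp_ge_add_one_self)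
    then have "exp c * (1 + (r - c)) \<le> exp c * exp (r - c)" by (intro mult_left_mono) auto
    then show ?thesis by (simp add: exp_diff)
  qed
  have "exp c * (1 + max r 0 + max (-c) 0) \<le> exp r + exp c * (max (-r) 0 + max c 0)"
    using key by (auto simp: max_def algebra_simps)
  moreover have "e2ennreal y = ennreal (max r 0)" "e2ennreal (-y) = ennreal (max (-r) 0)"
    using real by (auto simp: max_def ennreal_neg)
  moreover have "ennreal (exp c * (1 + max r 0 + max (- c) 0)) \<le> ennreal (exp r + exp c * (max (- r) 0 + max c 0))"
    by (rule ennreal_leI) fact
  ultimately show ?thesis using real
    by (simp add: eexp_def ennreal_mult ennreal_plus add_nonneg_nonneg)
next
  case PInf then show ?thesis by (simp add: eexp_def)
next
  case MInf then show ?thesis by (simp add: eexp_def ennreal_mult_top)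
qed

lemma jensen_exp:
  fixes f :: "'b \<Rightarrow> ereal"
  assumes M: "prob_space M" and f[measurable]: "f \<in> borel_measurable M"
    and fin: "epos M f \<noteq> \<top> \<or> eneg M f \<noteq> \<top>"
  shows "eexp (eexpect M f) \<le> (\<integral>\<^sup>+x. eexp (f x) \<partial>M)"
proof -
  define P where "P = epos M f"
  define N where "N = eneg M f"
  have PI: "P \<le> (\<integral>\<^sup>+x. eexp (f x) \<partial>M)"
    unfolding P_def epos_def by (intro nn_integral_mono eexp_ge_e2ennreal)
  consider "P = \<top>" "N \<noteq> \<top>" | "N = \<top>" "P \<noteq> \<top>" | "P \<noteq> \<top>" "N \<noteq> \<top>"
    using fin unfolding P_def N_def by blast
  then show ?thesis
  proof cases
    case 1
    then have "eexpect M f = \<infinity>"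
      unfolding eexpect_def P_def[symmetric] N_def[symmetric]
      by (cases N) auto
    then show ?thesis using PI 1 by (simp add: eexp_def)
  next
    case 2
    then have "eexpect M f = -\<infinity>"
      unfolding eexpect_def P_def[symmetric] N_def[symmetric]
      by (cases P) auto
    then show ?thesis by (simp add: eexp_def)
  next
    case 3
    then obtain p n where pn: "P = ennreal p" "N = ennreal n" "0 \<le> p" "0 \<le> n"
      by (cases P; cases N) auto
    define c where "c = p - n"
    have ex: "eexpect M f = ereal c"
      unfolding eexpect_def P_def[symmetric] N_def[symmetric] c_def using pn by simp
    obtain cp cm where cpm: "cp = max c 0" "cm = max (-c) 0" by blast
    then have cpm0: "0 \<le> cp" "0 \<le> cm" by auto
    have "(\<integral>\<^sup>+x. ennreal (exp c) * (1 + e2ennreal (f x) + ennreal cm) \<partial>M)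
        \<le> (\<integral>\<^sup>+x. eexp (f x) + ennreal (exp c) * (e2ennreal (- f x) + ennreal cp) \<partial>M)"
      unfolding cpm by (intro nn_integral_mono exp_tangent_enn)
    also have "(\<integral>\<^sup>+x. ennreal (exp c) * (1 + e2ennreal (f x) + ennreal cm) \<partial>M)
        = ennreal (exp c) * (1 + P + ennreal cm)"
      using M unfolding P_def epos_def
      by (simp add: nn_integral_cmult nn_integral_add prob_space.emeasure_space_1)
    also have "(\<integral>\<^sup>+x. eexp (f x) + ennreal (exp c) * (e2ennreal (- f x) + ennreal cp) \<partial>M)
        = (\<integral>\<^sup>+x. eexp (f x) \<partial>M) + ennreal (exp c) * (N + ennreal cp)"
      using M unfolding N_def eneg_def
      by (simp add: nn_integral_cmult nn_integral_add prob_space.emeasure_space_1)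
    finally have ineq: "ennreal (exp c) * (1 + P + ennreal cm)
        \<le> (\<integral>\<^sup>+x. eexp (f x) \<partial>M) + ennreal (exp c) * (N + ennreal cp)" .
    have "p + cm = n + cp" unfolding c_def cpm by (auto simp: max_def)
    then have "ennreal p + ennreal cm = ennreal n + ennreal cp"
      using pn cpm0 by (metis ennreal_plus)
    then have "ennreal (exp c) * (1 + P + ennreal cm) = ennreal (exp c) + ennreal (exp c) * (N + ennreal cp)"
      using pn by (simp add: add.assoc distrib_left)
    then have "ennreal (exp c) + ennreal (exp c) * (N + ennreal cp)
        \<le> (\<integral>\<^sup>+x. eexp (f x) \<partial>M) + ennreal (exp c) * (N + ennreal cp)"
      using ineq by simp
    moreover have "ennreal (exp c) * (N + ennreal cp) \<noteq> \<top>"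
      using pn by (simp add: ennreal_mult_eq_top_iff)
    ultimately have "ennreal (exp c) \<le> (\<integral>\<^sup>+x. eexp (f x) \<partial>M)"
    proof -
      fix X I a :: ennreal
      assume "a + X \<le> I + X" "X \<noteq> \<top>"
      then show "a \<le> I" using ennreal_add_left_cancel_le[of X a I] by (simp add: add.commute)
    qed
    then show ?thesis using ex by (simp add: eexp_def)
  qed
qed



lemma density_kernel:
  assumes sf: "sigma_finite_measure N"
    and f[measurable]: "(\<lambda>(x, y). f x y) \<in> borel_measurable (X \<Otimes>\<^sub>M N)"
    and norm: "\<And>x. x \<in> space X \<Longrightarrow> (\<integral>\<^sup>+y. ennreal (f x y) \<partial>N) = 1"
  shows "(\<lambda>x. density N (\<lambda>y. ennreal (f x y))) \<in> X \<rightarrow>\<^sub>M prob_algebra N"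
proof (rule measurable_prob_algebraI)
  have fx[measurable]: "f x \<in> borel_measurable N" if "x \<in> space X" for x
    using measurable_Pair2[OF f that] by simp
  show ps: "prob_space (density N (\<lambda>y. ennreal (f x y)))" if x: "x \<in> space X" for x
    by (rule prob_spaceI) (simp add: emeasure_density fx x norm)
  show "(\<lambda>x. density N (\<lambda>y. ennreal (f x y))) \<in> X \<rightarrow>\<^sub>M subprob_algebra N"
  proof (rule measurable_subprob_algebra)
    fix x assume x: "x \<in> space X"
    show "subprob_space (density N (\<lambda>y. ennreal (f x y)))"
      by (rule prob_space_imp_subprob_space[OF ps[OF x]])
    show "sets (density N (\<lambda>y. ennreal (f x y))) = sets N" by simp
  next
    fix A assume A[measurable]: "A \<in> sets N"
    have "(\<lambda>x. \<integral>\<^sup>+y. ennreal (f x y) * indicator A y \<partial>N) \<in> borel_measurable X"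
      by (rule sigma_finite_measure.borel_measurable_nn_integral[OF sf]) measurable
    then show "(\<lambda>x. emeasure (density N (\<lambda>y. ennreal (f x y))) A) \<in> borel_measurable X"
      by (rule measurable_cong[THEN iffD1, rotated]) (simp add: emeasure_density fx)
  qed
qed

locale mdp =
  fixes \<gamma> :: real
    and Ms :: "'s measure" and Ma :: "'a measure" and Mz :: "'z measure"
    and p0 :: "'s \<Rightarrow> real" and p :: "'s \<Rightarrow> 'a \<Rightarrow> 's \<Rightarrow> real"
    and r :: "'s \<Rightarrow> 'a \<Rightarrow> real"
    and e :: "'s \<Rightarrow> 'z \<Rightarrow> real" and m :: "'z \<Rightarrow> 'a \<Rightarrow> 'z \<Rightarrow> real"
    and pol :: "'z \<Rightarrow> 'a measure"
  assumes gamma0: "0 \<le> \<gamma>" and gamma1: "\<gamma> < 1"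
    and sfS: "sigma_finite_measure Ms" and sfZ: "sigma_finite_measure Mz"
    and p0_meas: "p0 \<in> borel_measurable Ms"
    and p0_norm: "(\<integral>\<^sup>+ s. ennreal (p0 s) \<partial>Ms) = 1"
    and p_meas: "(\<lambda>(s, a, s'). p s a s') \<in> borel_measurable (Ms \<Otimes>\<^sub>M (Ma \<Otimes>\<^sub>M Ms))"
    and p_norm: "\<And>s a. s \<in> space Ms \<Longrightarrow> a \<in> space Ma \<Longrightarrow> (\<integral>\<^sup>+ s'. ennreal (p s a s') \<partial>Ms) = 1"
    and r_meas: "(\<lambda>(s, a). r s a) \<in> borel_measurable (Ms \<Otimes>\<^sub>M Ma)"
    and e_meas: "(\<lambda>(s, z). e s z) \<in> borel_measurable (Ms \<Otimes>\<^sub>M Mz)"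
    and e_norm: "\<And>s. s \<in> space Ms \<Longrightarrow> (\<integral>\<^sup>+ z. ennreal (e s z) \<partial>Mz) = 1"
    and m_meas: "(\<lambda>(z, a, z'). m z a z') \<in> borel_measurable (Mz \<Otimes>\<^sub>M (Ma \<Otimes>\<^sub>M Mz))"
    and m_norm: "\<And>z a. z \<in> space Mz \<Longrightarrow> a \<in> space Ma \<Longrightarrow> (\<integral>\<^sup>+ z'. ennreal (m z a z') \<partial>Mz) = 1"
    and pol_kernel: "pol \<in> measurable Mz (prob_algebra Ma)"
begin

abbreviation "SA \<equiv> Ms \<Otimes>\<^sub>M Ma"
abbreviation "PK x \<equiv> density Ms (\<lambda>s'. ennreal (p (fst x) (snd x) s'))"
abbreviation "EK s \<equiv> density Mz (\<lambda>z. ennreal (e s z))"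
abbreviation "MK x \<equiv> density Mz (\<lambda>z'. ennreal (m (fst x) (snd x) z'))"
abbreviation "step \<equiv> sa_step Ms Ma Mz p e pol"
abbreviation "iter \<equiv> sa_iter Ms Ma Mz p e pol"
abbreviation "Q \<equiv> Qfun \<gamma> r Ms Ma Mz p e pol"
abbreviation "rest s' \<equiv> EK s' \<bind> (\<lambda>z'. pol z' \<bind> (\<lambda>a'. return SA (s', a')))"

lemma p_meas': "(\<lambda>y. p (fst (fst y)) (snd (fst y)) (snd y)) \<in> borel_measurable ((Ms \<Otimes>\<^sub>M Ma) \<Otimes>\<^sub>M Ms)"
proof -
  have "(\<lambda>y. case (fst (fst y), snd (fst y), snd y) of (s, a, s') \<Rightarrow> p s a s') \<in> borel_measurable ((Ms \<Otimes>\<^sub>M Ma) \<Otimes>\<^sub>M Ms)"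
    by (rule measurable_compose[OF _ p_meas]) measurable
  then show ?thesis by simp
qed

lemma m_meas': "(\<lambda>y. m (fst (fst y)) (snd (fst y)) (snd y)) \<in> borel_measurable ((Mz \<Otimes>\<^sub>M Ma) \<Otimes>\<^sub>M Mz)"
proof -
  have "(\<lambda>y. case (fst (fst y), snd (fst y), snd y) of (s, a, s') \<Rightarrow> m s a s') \<in> borel_measurable ((Mz \<Otimes>\<^sub>M Ma) \<Otimes>\<^sub>M Mz)"
    by (rule measurable_compose[OF _ m_meas]) measurable
  then show ?thesis by simp
qed

lemma kP: "PK \<in> SA \<rightarrow>\<^sub>M prob_algebra Ms"
  by (rule density_kernel[OF sfS, where f="\<lambda>x s'. p (fst x) (snd x) s'"])
     (use p_meas' in \<open>auto simp: case_prod_beta space_pair_measure p_norm\<close>)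

lemma kE: "EK \<in> Ms \<rightarrow>\<^sub>M prob_algebra Mz"
  by (rule density_kernel[OF sfZ e_meas]) (simp add: e_norm)

lemma kM: "MK \<in> (Mz \<Otimes>\<^sub>M Ma) \<rightarrow>\<^sub>M prob_algebra Mz"
  by (rule density_kernel[OF sfZ, where f="\<lambda>x z'. m (fst x) (snd x) z'"])
     (use m_meas' in \<open>auto simp: case_prod_beta space_pair_measure m_norm\<close>)

lemma k_rest: "rest \<in> Ms \<rightarrow>\<^sub>M prob_algebra SA"
proof -
  have "(\<lambda>(s', z'). pol z' \<bind> (\<lambda>a'. return SA (s', a'))) \<in> (Ms \<Otimes>\<^sub>M Mz) \<rightarrow>\<^sub>M prob_algebra SA"
  proof -
    have "(\<lambda>x. pol (snd x) \<bind> (\<lambda>a'. return SA (fst x, a'))) \<in> (Ms \<Otimes>\<^sub>M Mz) \<rightarrow>\<^sub>M prob_algebra SA"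
      apply (rule measurable_bind_prob_space2[where N=Ma])
       apply (rule measurable_compose[OF measurable_snd pol_kernel])
      apply (simp only: case_prod_beta')
      apply (rule measurable_compose[OF _ measurable_return_prob_space])
      apply measurable
      done
    then show ?thesis by (simp add: case_prod_beta')
  qed
  then show ?thesis
    by (intro measurable_bind_prob_space2[OF kE]) simp
qed

lemma step_eq: "step x = PK x \<bind> rest"
  by (cases x) (simp add: sa_step_def)

lemma k_step: "step \<in> SA \<rightarrow>\<^sub>M prob_algebra SA"
  unfolding step_eq by (rule measurable_bind_prob_space[OF kP k_rest])

lemma k_iter: "iter n \<in> SA \<rightarrow>\<^sub>M prob_algebra SA"
proof (induction n)
  case 0 show ?case by (simp add: measurable_return_prob_space del: measurable_return2)
next
  case (Suc n)
  then show ?case by (simp add: measurable_bind_prob_space[OF _ k_step] del: measurable_return2)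
qed

lemma sets_step: "x \<in> space SA \<Longrightarrow> sets (step x) = sets SA"
  using measurable_space[OF k_step] by (auto simp: space_prob_algebra)

lemma sets_iter: "x \<in> space SA \<Longrightarrow> sets (iter n x) = sets SA"
  using measurable_space[OF k_iter] by (auto simp: space_prob_algebra)

lemma prob_step: "x \<in> space SA \<Longrightarrow> prob_space (step x)"
  using measurable_space[OF k_step] by (auto simp: space_prob_algebra)

lemma k_step': "step \<in> SA \<rightarrow>\<^sub>M subprob_algebra SA"
  by (rule measurable_prob_algebraD[OF k_step])

lemma k_iter': "iter n \<in> SA \<rightarrow>\<^sub>M subprob_algebra SA"
  by (rule measurable_prob_algebraD[OF k_iter])

lemma iter_commute: "x \<in> space SA \<Longrightarrow> iter (Suc n) x = step x \<bind> iter n"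
proof (induction n)
  case 0
  have "iter (Suc 0) x = step x" using 0 by (simp add: bind_return[OF k_step'])
  also have "\<dots> = step x \<bind> return SA" by (rule bind_return''[symmetric]) (simp add: sets_step 0)
  finally show ?case by simp
next
  case (Suc n)
  have "iter (Suc (Suc n)) x = (step x \<bind> iter n) \<bind> step" using Suc by simp
  also have "\<dots> = step x \<bind> (\<lambda>y. iter n y \<bind> step)"
    by (rule bind_assoc[where N=SA and R=SA])
       (auto simp: measurable_cong_sets[OF sets_step[OF Suc.prems] refl] k_iter' k_step')
  finally show ?case by simp
qed

definition I :: "nat \<Rightarrow> 's \<times> 'a \<Rightarrow> ennreal" where
  "I t x = (\<integral>\<^sup>+y. ennreal (r (fst y) (snd y)) \<partial>(iter t x))"

lemma r_meas'[measurable]: "(\<lambda>y. r (fst y) (snd y)) \<in> borel_measurable SA"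
  using r_meas by (simp add: case_prod_beta')

lemma I_meas[measurable]: "I t \<in> borel_measurable SA"
  unfolding I_def
  by (rule measurable_compose[OF k_iter' nn_integral_measurable_subprob_algebra]) measurable

lemma I_0: "x \<in> space SA \<Longrightarrow> I 0 x = ennreal (r (fst x) (snd x))"
  unfolding I_def by (simp add: nn_integral_return)

lemma I_Suc: "x \<in> space SA \<Longrightarrow> I (Suc t) x = (\<integral>\<^sup>+y. I t y \<partial>step x)"
  unfolding I_def iter_commute
  by (subst nn_integral_bind[where B=SA])
     (auto simp: measurable_cong_sets[OF sets_step refl] k_iter')

lemma Q_eq: "Q s a = ennreal (1 - \<gamma>) * (\<Sum>t. ennreal (\<gamma> ^ t) * I t (s, a))"
  by (simp add: Qfun_def I_def)

definition S :: "'s \<times> 'a \<Rightarrow> ennreal" where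
  "S x = (\<Sum>t. ennreal (\<gamma> ^ t) * I t x)"

lemma S_meas[measurable]: "S \<in> borel_measurable SA"
  unfolding S_def by measurable

lemma Q_S: "Q (fst x) (snd x) = ennreal (1 - \<gamma>) * S x"
  by (simp add: Q_eq S_def)

lemma Q_meas[measurable]: "(\<lambda>x. Q (fst x) (snd x)) \<in> borel_measurable SA"
  unfolding Q_S by measurable

lemma S_bellman: "x \<in> space SA \<Longrightarrow> S x = ennreal (r (fst x) (snd x)) + ennreal \<gamma> * (\<integral>\<^sup>+y. S y \<partial>step x)"
proof -
  assume x: "x \<in> space SA"
  have ms: "I t \<in> borel_measurable (step x)" for t
    using x by (simp add: measurable_cong_sets[OF sets_step refl])
  have "S x = (\<Sum>t. ennreal (\<gamma> ^ (Suc t)) * I (Suc t) x) + ennreal (\<gamma> ^ 0) * I 0 x"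
    unfolding S_def by (subst suminf_offset[of _ 1]) auto
  also have "(\<Sum>t. ennreal (\<gamma> ^ (Suc t)) * I (Suc t) x) = (\<Sum>t. ennreal \<gamma> * (\<integral>\<^sup>+y. ennreal (\<gamma> ^ t) * I t y \<partial>step x))"
    using x gamma0 by (simp add: I_Suc nn_integral_cmult[OF ms] ennreal_mult mult.assoc)
  also have "\<dots> = ennreal \<gamma> * (\<integral>\<^sup>+y. S y \<partial>step x)"
    unfolding S_def using x
    by (simp add: nn_integral_suminf measurable_cong_sets[OF sets_step refl])
  finally show ?thesis using x by (simp add: I_0 add.commute)
qed

lemma Q_bellman: "x \<in> space SA \<Longrightarrow> Q (fst x) (snd x) =
   ennreal (1 - \<gamma>) * ennreal (r (fst x) (snd x)) + ennreal \<gamma> * (\<integral>\<^sup>+y. Q (fst y) (snd y) \<partial>step x)"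
  unfolding Q_S
  by (subst S_bellman) (auto simp: nn_integral_cmult measurable_cong_sets[OF sets_step refl] distrib_left mult.left_commute)

abbreviation "init \<equiv> sa_init Ms Ma Mz p0 e pol"

lemma init_eq: "init = density Ms (\<lambda>s. ennreal (p0 s)) \<bind> rest"
  by (simp add: sa_init_def)

lemma init_in: "density Ms (\<lambda>s. ennreal (p0 s)) \<in> space (prob_algebra Ms)"
proof -
  have pm: "(\<lambda>s. ennreal (p0 s)) \<in> borel_measurable Ms" using p0_meas by measurable
  have "(\<integral>\<^sup>+x. ennreal (p0 x) * indicator (space Ms) x \<partial>Ms) = (\<integral>\<^sup>+x. ennreal (p0 x) \<partial>Ms)"
    by (rule nn_integral_cong) simp
  then show ?thesis unfolding space_prob_algebra
    by (auto intro!: prob_spaceI simp: emeasure_density[OF pm sets.top] p0_norm)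
qed

lemma init_prob: "init \<in> space (prob_algebra SA)"
  unfolding init_eq using measurable_space[OF measurable_bind_prob_space[OF measurable_const[OF init_in, of "count_space UNIV"] k_rest]]
  by simp

lemma sets_init: "sets init = sets SA"
  using init_prob by (simp add: space_prob_algebra)

lemma true_return_eq: "true_return \<gamma> r Ms Ma Mz p0 p e pol = (\<integral>\<^sup>+x. S x \<partial>init)"
proof -
  have "true_return \<gamma> r Ms Ma Mz p0 p e pol = (\<Sum>t. ennreal (\<gamma> ^ t) * (\<integral>\<^sup>+x. I t x \<partial>init))"
    unfolding true_return_def I_def
    by (subst nn_integral_bind[where B=SA]) (auto simp: measurable_cong_sets[OF sets_init refl] k_iter')
  also have "\<dots> = (\<integral>\<^sup>+x. S x \<partial>init)"
    unfolding S_def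
    by (simp add: nn_integral_suminf nn_integral_cmult measurable_cong_sets[OF sets_init refl])
  finally show ?thesis .
qed

definition Hf :: "'s \<Rightarrow> 'z \<Rightarrow> ennreal" where
  "Hf s' z' = (\<integral>\<^sup>+a'. Q s' a' \<partial>pol z')"

definition G2 :: "'s \<Rightarrow> ennreal" where
  "G2 s' = (\<integral>\<^sup>+z'. Hf s' z' \<partial>EK s')"

lemma pol_kernel': "pol \<in> Mz \<rightarrow>\<^sub>M subprob_algebra Ma"
  by (rule measurable_prob_algebraD[OF pol_kernel])

lemma kE': "EK \<in> Ms \<rightarrow>\<^sub>M subprob_algebra Mz"
  by (rule measurable_prob_algebraD[OF kE])

lemma kP': "PK \<in> SA \<rightarrow>\<^sub>M subprob_algebra Ms"
  by (rule measurable_prob_algebraD[OF kP])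

lemma kM': "MK \<in> (Mz \<Otimes>\<^sub>M Ma) \<rightarrow>\<^sub>M subprob_algebra Mz"
  by (rule measurable_prob_algebraD[OF kM])

lemma k_rest': "rest \<in> Ms \<rightarrow>\<^sub>M subprob_algebra SA"
  by (rule measurable_prob_algebraD[OF k_rest])

lemma Hf_meas: "(\<lambda>x. Hf (fst x) (snd x)) \<in> borel_measurable (Ms \<Otimes>\<^sub>M Mz)"
proof -
  have "(\<lambda>x. integral\<^sup>N (pol (snd x)) (\<lambda>a'. Q (fst x) a')) \<in> borel_measurable (Ms \<Otimes>\<^sub>M Mz)"
  proof (rule nn_integral_measurable_subprob_algebra2[where N=Ma])
    show "(\<lambda>(x, y). Q (fst x) y) \<in> borel_measurable ((Ms \<Otimes>\<^sub>M Mz) \<Otimes>\<^sub>M Ma)"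
      using measurable_compose[OF _ Q_meas, of "\<lambda>(x, y). (fst x, y)" "(Ms \<Otimes>\<^sub>M Mz) \<Otimes>\<^sub>M Ma"]
      by (simp add: case_prod_beta') 
    show "(\<lambda>x. pol (snd x)) \<in> Ms \<Otimes>\<^sub>M Mz \<rightarrow>\<^sub>M subprob_algebra Ma"
      by (rule measurable_compose[OF measurable_snd pol_kernel'])
  qed
  then show ?thesis by (simp add: Hf_def)
qed

lemma G2_meas: "G2 \<in> borel_measurable Ms"
  unfolding G2_def
  by (rule nn_integral_measurable_subprob_algebra2[where N=Mz, OF _ kE'])
     (use Hf_meas in \<open>simp add: case_prod_beta'\<close>)

lemma Qa_meas: "s' \<in> space Ms \<Longrightarrow> (\<lambda>a'. Q s' a') \<in> borel_measurable Ma"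
  using measurable_Pair2[OF Q_meas] by simp

lemma Hz_meas: "s' \<in> space Ms \<Longrightarrow> (\<lambda>z'. Hf s' z') \<in> borel_measurable Mz"
  using measurable_Pair2[OF Hf_meas] by simp

lemma int_rest: "s' \<in> space Ms \<Longrightarrow> (\<integral>\<^sup>+y. Q (fst y) (snd y) \<partial>rest s') = G2 s'"
proof -
  assume s': "s' \<in> space Ms"
  have k2: "(\<lambda>z'. pol z' \<bind> (\<lambda>a'. return SA (s', a'))) \<in> Mz \<rightarrow>\<^sub>M subprob_algebra SA"
  proof (rule measurable_bind2[OF pol_kernel'])
    show "(\<lambda>a'. return SA (s', a')) \<in> Ma \<rightarrow>\<^sub>M subprob_algebra SA"
      by (rule measurable_compose[OF _ return_measurable]) (use s' in measurable)
  qed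
  have "(\<integral>\<^sup>+y. Q (fst y) (snd y) \<partial>rest s') = (\<integral>\<^sup>+z'. (\<integral>\<^sup>+y. Q (fst y) (snd y) \<partial>(pol z' \<bind> (\<lambda>a'. return SA (s', a')))) \<partial>EK s')"
    by (rule nn_integral_bind[OF Q_meas]) (use k2 in simp)
  also have "\<dots> = (\<integral>\<^sup>+z'. Hf s' z' \<partial>EK s')"
  proof (rule nn_integral_cong)
    fix z' assume z': "z' \<in> space (EK s')"
    then have z'': "z' \<in> space Mz" by simp
    have polsets: "sets (pol z') = sets Ma" using measurable_space[OF pol_kernel z''] by (simp add: space_prob_algebra)
    have "(\<integral>\<^sup>+y. Q (fst y) (snd y) \<partial>(pol z' \<bind> (\<lambda>a'. return SA (s', a'))))
        = (\<integral>\<^sup>+a'. (\<integral>\<^sup>+y. Q (fst y) (snd y) \<partial>return SA (s', a')) \<partial>pol z')"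
    proof (rule nn_integral_bind[OF Q_meas])
      show "(\<lambda>a'. return SA (s', a')) \<in> pol z' \<rightarrow>\<^sub>M subprob_algebra SA"
        unfolding measurable_cong_sets[OF polsets refl]
        by (rule measurable_compose[OF _ return_measurable]) (use s' in measurable)
    qed
    also have "\<dots> = Hf s' z'"
      unfolding Hf_def
    proof (rule nn_integral_cong)
      fix a' assume "a' \<in> space (pol z')"
      then have "a' \<in> space Ma" using sets_eq_imp_space_eq[OF polsets] by simp
      then have "(s', a') \<in> space SA" using s' by (simp add: space_pair_measure)
      from nn_integral_return[OF this Q_meas]
      show "(\<integral>\<^sup>+y. Q (fst y) (snd y) \<partial>return SA (s', a')) = Q s' a'" by simp
    qed
    finally show "(\<integral>\<^sup>+y. Q (fst y) (snd y) \<partial>(pol z' \<bind> (\<lambda>a'. return SA (s', a')))) = Hf s' z'" .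
  qed
  finally show ?thesis by (simp add: G2_def)
qed

lemma int_step: "x \<in> space SA \<Longrightarrow> (\<integral>\<^sup>+y. Q (fst y) (snd y) \<partial>step x) = (\<integral>\<^sup>+s'. G2 s' \<partial>PK x)"
proof -
  have "(\<integral>\<^sup>+y. Q (fst y) (snd y) \<partial>(PK x \<bind> rest)) = (\<integral>\<^sup>+s'. (\<integral>\<^sup>+y. Q (fst y) (snd y) \<partial>rest s') \<partial>PK x)"
    by (rule nn_integral_bind[OF Q_meas]) (simp add: k_rest')
  also have "\<dots> = (\<integral>\<^sup>+s'. G2 s' \<partial>PK x)"
    by (rule nn_integral_cong) (simp add: int_rest)
  finally show ?thesis by (simp add: step_eq)
qed

lemma pw_meas[measurable]: "f \<in> borel_measurable M \<Longrightarrow> (\<lambda>x. pw (f x) c) \<in> borel_measurable M"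
  unfolding pw_def by measurable

lemma prob_PK: "x \<in> space SA \<Longrightarrow> prob_space (PK x)"
  using measurable_space[OF kP] by (auto simp: space_prob_algebra)
lemma prob_EK: "s \<in> space Ms \<Longrightarrow> prob_space (EK s)"
  using measurable_space[OF kE] by (auto simp: space_prob_algebra)
lemma prob_MK: "x \<in> space (Mz \<Otimes>\<^sub>M Ma) \<Longrightarrow> prob_space (MK x)"
  using measurable_space[OF kM] by (auto simp: space_prob_algebra)
lemma prob_pol: "z \<in> space Mz \<Longrightarrow> prob_space (pol z)"
  using measurable_space[OF pol_kernel] by (auto simp: space_prob_algebra)
lemma sets_pol: "z \<in> space Mz \<Longrightarrow> sets (pol z) = sets Ma"
  using measurable_space[OF pol_kernel] by (auto simp: space_prob_algebra)

lemma e_z_meas: "s' \<in> space Ms \<Longrightarrow> (\<lambda>z'. e s' z') \<in> borel_measurable Mz"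
  using measurable_Pair2[OF e_meas] by simp

lemma m_z_meas: "z \<in> space Mz \<Longrightarrow> a \<in> space Ma \<Longrightarrow> (\<lambda>z'. m z a z') \<in> borel_measurable Mz"
  using measurable_Pair2[OF m_meas', of "(z, a)"] by (simp add: space_pair_measure)

lemma m_RM_le: "ennreal x * eexp (- eln (ennreal x)) \<le> 1"
proof (cases "x > 0")
  case True
  then have "ennreal x * eexp (- eln (ennreal x)) = ennreal (x * exp (- ln x))"
    by (simp add: eln_def eexp_def ennreal_mult)
  also have "\<dots> = 1" using True by (simp add: exp_minus exp_ln)
  finally show ?thesis by simp
next
  case False
  then show ?thesis by (simp add: ennreal_neg)
qed

lemma NM_eq: "0 \<le> \<alpha> \<Longrightarrow> eexp (-(ereal \<alpha> * eln y)) = pw (eexp (- eln y)) \<alpha>"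
  by (simp add: pw_def)

lemma one_step:
  assumes s: "s \<in> space Ms" and z: "z \<in> space Mz" and a: "a \<in> space Ma"
    and al: "0 \<le> \<alpha>" "\<alpha> \<le> 1"
  shows "(\<integral>\<^sup>+s'. \<integral>\<^sup>+z'. \<integral>\<^sup>+a'. pw (ennreal (r s a)) (\<alpha> * (1 - \<gamma>)) * pw (ennreal (e s' z')) \<alpha>
             * eexp (-(ereal \<alpha> * eln (ennreal (m z a z')))) * pw (Q s' a') (\<gamma> * \<alpha>)
           \<partial>pol z' \<partial>MK (z, a) \<partial>PK (s, a)) \<le> pw (Q s a) \<alpha>"
proof -
  have g0: "0 \<le> \<gamma>" "\<gamma> \<le> 1" using gamma0 gamma1 by auto
  have ga: "0 \<le> \<gamma> * \<alpha>" "\<gamma> * \<alpha> \<le> 1" using g0 al by (auto simp: mult_le_one)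
  define R where "R = pw (ennreal (r s a)) (\<alpha> * (1 - \<gamma>))"
  define RM where "RM z' = eexp (- eln (ennreal (m z a z')))" for z'
  define X where "X s' z' = ennreal (e s' z') * RM z' * pw (Hf s' z') \<gamma>" for s' z'
  have sa: "(s, a) \<in> space SA" using s a by (simp add: space_pair_measure)
  have za: "(z, a) \<in> space (Mz \<Otimes>\<^sub>M Ma)" using z a by (simp add: space_pair_measure)
  have stepa: "(\<integral>\<^sup>+a'. R * pw (ennreal (e s' z')) \<alpha> * eexp (-(ereal \<alpha> * eln (ennreal (m z a z')))) * pw (Q s' a') (\<gamma> * \<alpha>) \<partial>pol z')
      \<le> R * pw (X s' z') \<alpha>" if s': "s' \<in> space Ms" and z': "z' \<in> space Mz" for s' z'
  proof -
    have qm: "(\<lambda>a'. Q s' a') \<in> borel_measurable (pol z')"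
      using Qa_meas[OF s'] by (simp add: measurable_cong_sets[OF sets_pol[OF z'] refl])
    have "(\<integral>\<^sup>+a'. R * pw (ennreal (e s' z')) \<alpha> * eexp (-(ereal \<alpha> * eln (ennreal (m z a z')))) * pw (Q s' a') (\<gamma> * \<alpha>) \<partial>pol z')
       = R * pw (ennreal (e s' z')) \<alpha> * eexp (-(ereal \<alpha> * eln (ennreal (m z a z')))) * (\<integral>\<^sup>+a'. pw (Q s' a') (\<gamma> * \<alpha>) \<partial>pol z')"
      using qm by (simp add: nn_integral_cmult)
    also have "\<dots> \<le> R * pw (ennreal (e s' z')) \<alpha> * eexp (-(ereal \<alpha> * eln (ennreal (m z a z')))) * pw (Hf s' z') (\<gamma> * \<alpha>)"
      unfolding Hf_def by (intro mult_left_mono jensen_pw[OF prob_pol[OF z'] qm ga]) auto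
    also have "\<dots> = R * pw (X s' z') \<alpha>"
      unfolding X_def RM_def using al g0
      by (simp add: pw_mult NM_eq pw_pw ac_simps)
    finally show ?thesis .
  qed
  have stepz: "(\<integral>\<^sup>+z'. \<integral>\<^sup>+a'. R * pw (ennreal (e s' z')) \<alpha> * eexp (-(ereal \<alpha> * eln (ennreal (m z a z')))) * pw (Q s' a') (\<gamma> * \<alpha>) \<partial>pol z' \<partial>MK (z, a))
      \<le> R * pw (G2 s') (\<gamma> * \<alpha>)" if s': "s' \<in> space Ms" for s'
  proof -
    have em: "(\<lambda>z'. e s' z') \<in> borel_measurable Mz" by (rule e_z_meas[OF s'])
    have mm: "(\<lambda>z'. m z a z') \<in> borel_measurable Mz" by (rule m_z_meas[OF z a])
    have hm: "(\<lambda>z'. Hf s' z') \<in> borel_measurable Mz" by (rule Hz_meas[OF s'])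
    have Xm: "X s' \<in> borel_measurable Mz"
      unfolding X_def RM_def using em mm hm by measurable
    have "(\<integral>\<^sup>+z'. \<integral>\<^sup>+a'. R * pw (ennreal (e s' z')) \<alpha> * eexp (-(ereal \<alpha> * eln (ennreal (m z a z')))) * pw (Q s' a') (\<gamma> * \<alpha>) \<partial>pol z' \<partial>MK (z, a))
        \<le> (\<integral>\<^sup>+z'. R * pw (X s' z') \<alpha> \<partial>MK (z, a))"
      by (intro nn_integral_mono stepa[OF s']) simp
    also have "\<dots> = R * (\<integral>\<^sup>+z'. pw (X s' z') \<alpha> \<partial>MK (z, a))"
      using Xm by (simp add: nn_integral_cmult)
    also have "\<dots> \<le> R * pw (\<integral>\<^sup>+z'. X s' z' \<partial>MK (z, a)) \<alpha>"
      by (intro mult_left_mono jensen_pw[OF prob_MK[OF za]] al) (use Xm in auto)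
    also have "\<dots> \<le> R * pw (pw (G2 s') \<gamma>) \<alpha>"
    proof (intro mult_left_mono pw_mono al)
      have "(\<integral>\<^sup>+z'. X s' z' \<partial>MK (z, a)) = (\<integral>\<^sup>+z'. ennreal (m z a z') * X s' z' \<partial>Mz)"
        using mm Xm by (simp add: nn_integral_density)
      also have "\<dots> \<le> (\<integral>\<^sup>+z'. ennreal (e s' z') * pw (Hf s' z') \<gamma> \<partial>Mz)"
      proof (intro nn_integral_mono)
        fix z'
        have "ennreal (m z a z') * X s' z' = (ennreal (m z a z') * RM z') * (ennreal (e s' z') * pw (Hf s' z') \<gamma>)"
          unfolding X_def by (simp add: ac_simps)
        also have "\<dots> \<le> 1 * (ennreal (e s' z') * pw (Hf s' z') \<gamma>)"
          unfolding RM_def by (intro mult_right_mono m_RM_le) auto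
        finally show "ennreal (m z a z') * X s' z' \<le> ennreal (e s' z') * pw (Hf s' z') \<gamma>" by simp
      qed
      also have "\<dots> = (\<integral>\<^sup>+z'. pw (Hf s' z') \<gamma> \<partial>EK s')"
        using em hm by (simp add: nn_integral_density)
      also have "\<dots> \<le> pw (G2 s') \<gamma>"
        unfolding G2_def by (rule jensen_pw[OF prob_EK[OF s'] _ g0]) (use hm in simp)
      finally show "(\<integral>\<^sup>+z'. X s' z' \<partial>MK (z, a)) \<le> pw (G2 s') \<gamma>" .
    qed auto
    also have "\<dots> = R * pw (G2 s') (\<gamma> * \<alpha>)" using al g0 by (simp add: pw_pw)
    finally show ?thesis .
  qed
  have "(\<integral>\<^sup>+s'. \<integral>\<^sup>+z'. \<integral>\<^sup>+a'. R * pw (ennreal (e s' z')) \<alpha> * eexp (-(ereal \<alpha> * eln (ennreal (m z a z')))) * pw (Q s' a') (\<gamma> * \<alpha>) \<partial>pol z' \<partial>MK (z, a) \<partial>PK (s, a))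
      \<le> (\<integral>\<^sup>+s'. R * pw (G2 s') (\<gamma> * \<alpha>) \<partial>PK (s, a))"
    by (intro nn_integral_mono stepz) simp
  also have "\<dots> = R * (\<integral>\<^sup>+s'. pw (G2 s') (\<gamma> * \<alpha>) \<partial>PK (s, a))"
    using G2_meas by (simp add: nn_integral_cmult)
  also have "\<dots> \<le> R * pw (\<integral>\<^sup>+s'. G2 s' \<partial>PK (s, a)) (\<gamma> * \<alpha>)"
    by (intro mult_left_mono jensen_pw[OF prob_PK[OF sa]] ga) (use G2_meas in auto)
  also have "(\<integral>\<^sup>+s'. G2 s' \<partial>PK (s, a)) = (\<integral>\<^sup>+y. Q (fst y) (snd y) \<partial>step (s, a))"
    using int_step[OF sa] by simp
  also have "R * pw (\<integral>\<^sup>+y. Q (fst y) (snd y) \<partial>step (s, a)) (\<gamma> * \<alpha>)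
      = pw (pw (\<integral>\<^sup>+y. Q (fst y) (snd y) \<partial>step (s, a)) \<gamma> * pw (ennreal (r s a)) (1 - \<gamma>)) \<alpha>"
    unfolding R_def using al g0 by (simp add: pw_mult pw_pw mult.commute)
  also have "\<dots> \<le> pw (ennreal \<gamma> * (\<integral>\<^sup>+y. Q (fst y) (snd y) \<partial>step (s, a)) + ennreal (1 - \<gamma>) * ennreal (r s a)) \<alpha>"
    by (intro pw_mono young_pw al g0)
  also have "\<dots> = pw (Q s a) \<alpha>"
    using Q_bellman[OF sa] by (simp add: add.commute)
  finally show ?thesis unfolding R_def .
qed

end



context mdp
begin

abbreviation "X3 \<equiv> Ms \<Otimes>\<^sub>M (Mz \<Otimes>\<^sub>M Ma)"
abbreviation "Om k \<equiv> PiM {..k::nat} (\<lambda>_. X3)"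
abbreviation "q k \<equiv> q_traj Ms Ma Mz p0 p e m pol k"

definition qstep :: "nat \<Rightarrow> (nat \<Rightarrow> 's \<times> 'z \<times> 'a) \<Rightarrow> (nat \<Rightarrow> 's \<times> 'z \<times> 'a) measure" where
  "qstep k \<omega> = PK (fst (\<omega> k), snd (snd (\<omega> k))) \<bind> (\<lambda>s'. MK (snd (\<omega> k)) \<bind>
      (\<lambda>z'. pol z' \<bind> (\<lambda>a'. return (Om (Suc k)) (fun_upd \<omega> (Suc k) (s', z', a')))))"

lemma q_Suc: "q (Suc k) = q k \<bind> qstep k"
  by (simp add: qstep_def[abs_def] split_beta')

lemma upd_meas: "\<omega> \<in> space (Om k) \<Longrightarrow> (\<lambda>x. fun_upd \<omega> (Suc k) x) \<in> X3 \<rightarrow>\<^sub>M Om (Suc k)"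
  using measurable_component_update[of \<omega> "{..k}" "\<lambda>_. X3" "Suc k"]
  by (simp add: atMost_Suc)

lemma k_inner:
  assumes \<omega>: "\<omega> \<in> space (Om k)"
  shows "(\<lambda>s'. MK (snd (\<omega> k)) \<bind>
      (\<lambda>z'. pol z' \<bind> (\<lambda>a'. return (Om (Suc k)) (fun_upd \<omega> (Suc k) (s', z', a'))))) \<in> Ms \<rightarrow>\<^sub>M prob_algebra (Om (Suc k))"
proof -
  have wk: "\<omega> k \<in> space X3" using \<omega> by (auto simp: space_PiM)
  then have za: "snd (\<omega> k) \<in> space (Mz \<Otimes>\<^sub>M Ma)" by (auto simp: space_pair_measure)
  have r1: "(\<lambda>x. return (Om (Suc k)) (fun_upd \<omega> (Suc k) (fst (fst x), snd (fst x), snd x))) \<in> (Ms \<Otimes>\<^sub>M Mz) \<Otimes>\<^sub>M Ma \<rightarrow>\<^sub>M prob_algebra (Om (Suc k))"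
    by (rule measurable_compose[OF _ measurable_return_prob_space], rule measurable_compose[OF _ upd_meas[OF \<omega>]]) measurable
  have r2: "(\<lambda>x. pol (snd x) \<bind> (\<lambda>a'. return (Om (Suc k)) (fun_upd \<omega> (Suc k) (fst x, snd x, a')))) \<in> Ms \<Otimes>\<^sub>M Mz \<rightarrow>\<^sub>M prob_algebra (Om (Suc k))"
    by (rule measurable_bind_prob_space2[OF measurable_compose[OF measurable_snd pol_kernel]]) (use r1 in \<open>simp add: case_prod_beta'\<close>)
  show ?thesis
    by (rule measurable_bind_prob_space2[OF measurable_const[of _ "prob_algebra Mz"]])
       (use r2 measurable_space[OF kM za] in \<open>simp_all add: case_prod_beta'\<close>)
qed

lemma k_qstep: "qstep k \<in> Om k \<rightarrow>\<^sub>M prob_algebra (Om (Suc k))"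
proof -
  have c: "(\<lambda>\<omega>. \<omega> k) \<in> Om k \<rightarrow>\<^sub>M X3" by (rule measurable_component_singleton) simp
  have "(\<lambda>\<omega>. PK (fst (\<omega> k), snd (snd (\<omega> k)))) \<in> Om k \<rightarrow>\<^sub>M prob_algebra Ms"
    by (rule measurable_compose[OF _ kP]) (use c in measurable)
  moreover have "(\<lambda>(\<omega>, s'). MK (snd (\<omega> k)) \<bind>
      (\<lambda>z'. pol z' \<bind> (\<lambda>a'. return (Om (Suc k)) (fun_upd \<omega> (Suc k) (s', z', a'))))) \<in> Om k \<Otimes>\<^sub>M Ms \<rightarrow>\<^sub>M prob_algebra (Om (Suc k))"
  proof -
    have u: "(\<lambda>y. fun_upd (fst (fst (fst y))) (Suc k) (snd (fst (fst y)), snd (fst y), snd y))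
        \<in> ((Om k \<Otimes>\<^sub>M Ms) \<Otimes>\<^sub>M Mz) \<Otimes>\<^sub>M Ma \<rightarrow>\<^sub>M Om (Suc k)"
      by (rule measurable_fun_upd[where J="{..k}"]) (auto simp: atMost_Suc)
    have r1: "(\<lambda>y. return (Om (Suc k)) (fun_upd (fst (fst (fst y))) (Suc k) (snd (fst (fst y)), snd (fst y), snd y)))
        \<in> ((Om k \<Otimes>\<^sub>M Ms) \<Otimes>\<^sub>M Mz) \<Otimes>\<^sub>M Ma \<rightarrow>\<^sub>M prob_algebra (Om (Suc k))"
      by (rule measurable_compose[OF u measurable_return_prob_space])
    have r2: "(\<lambda>y. pol (snd y) \<bind> (\<lambda>a'. return (Om (Suc k)) (fun_upd (fst (fst y)) (Suc k) (snd (fst y), snd y, a'))))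
        \<in> (Om k \<Otimes>\<^sub>M Ms) \<Otimes>\<^sub>M Mz \<rightarrow>\<^sub>M prob_algebra (Om (Suc k))"
      by (rule measurable_bind_prob_space2[OF measurable_compose[OF measurable_snd pol_kernel]])
         (use r1 in \<open>simp add: case_prod_beta'\<close>)
    have c2: "(\<lambda>x. snd (fst x k)) \<in> Om k \<Otimes>\<^sub>M Ms \<rightarrow>\<^sub>M Mz \<Otimes>\<^sub>M Ma"
    proof -
      have "(\<lambda>\<omega>. \<omega> k) \<in> Om k \<rightarrow>\<^sub>M X3" by (rule measurable_component_singleton) simp
      then show ?thesis by measurable
    qed
    have r3: "(\<lambda>x. MK (snd (fst x k)) \<bind> (\<lambda>z'. pol z' \<bind> (\<lambda>a'. return (Om (Suc k)) (fun_upd (fst x) (Suc k) (snd x, z', a')))))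
        \<in> Om k \<Otimes>\<^sub>M Ms \<rightarrow>\<^sub>M prob_algebra (Om (Suc k))"
      by (rule measurable_bind_prob_space2[OF measurable_compose[OF c2 kM]])
         (use r2 in \<open>simp add: case_prod_beta'\<close>)
    then show ?thesis by (simp add: case_prod_beta')
  qed
  ultimately show ?thesis unfolding qstep_def
    by (rule measurable_bind_prob_space2)
qed

lemma q_prob: "q k \<in> space (prob_algebra (Om k))"
proof (induction k)
  case 0
  have u: "(\<lambda>y. \<lambda>i\<in>{..0::nat}. (fst (fst y), snd (fst y), snd y)) \<in> (Ms \<Otimes>\<^sub>M Mz) \<Otimes>\<^sub>M Ma \<rightarrow>\<^sub>M Om 0"
    by measurable
  have r1: "(\<lambda>y. return (Om 0) (\<lambda>i\<in>{..0::nat}. (fst (fst y), snd (fst y), snd y))) \<in> (Ms \<Otimes>\<^sub>M Mz) \<Otimes>\<^sub>M Ma \<rightarrow>\<^sub>M prob_algebra (Om 0)"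
    by (rule measurable_compose[OF u measurable_return_prob_space])
  have r2: "(\<lambda>y. pol (snd y) \<bind> (\<lambda>a. return (Om 0) (\<lambda>i\<in>{..0::nat}. (fst y, snd y, a)))) \<in> Ms \<Otimes>\<^sub>M Mz \<rightarrow>\<^sub>M prob_algebra (Om 0)"
    by (rule measurable_bind_prob_space2[OF measurable_compose[OF measurable_snd pol_kernel]])
       (use r1 in \<open>simp add: case_prod_beta'\<close>)
  have r3: "(\<lambda>s. EK s \<bind> (\<lambda>z. pol z \<bind> (\<lambda>a. return (Om 0) (\<lambda>i\<in>{..0::nat}. (s, z, a))))) \<in> Ms \<rightarrow>\<^sub>M prob_algebra (Om 0)"
    by (rule measurable_bind_prob_space2[OF kE]) (use r2 in \<open>simp add: case_prod_beta'\<close>)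
  show ?case
    using measurable_space[OF measurable_bind_prob_space[OF measurable_const[OF init_in, of "count_space UNIV"] r3]]
    by simp
next
  case (Suc k)
  show ?case unfolding q_Suc
    using measurable_space[OF measurable_bind_prob_space[OF measurable_const[OF Suc, of "count_space UNIV"] k_qstep]]
    by simp
qed

lemma sets_q: "sets (q k) = sets (Om k)"
  using q_prob[of k] by (simp add: space_prob_algebra)

lemma prob_q: "prob_space (q k)"
  using q_prob[of k] by (simp add: space_prob_algebra)

definition F :: "nat \<Rightarrow> (nat \<Rightarrow> 's \<times> 'z \<times> 'a) \<Rightarrow> ennreal" where
  "F t \<omega> = pw (ennreal (r (fst (\<omega> t)) (snd (snd (\<omega> t))))) (\<gamma> ^ t * (1 - \<gamma>))
     * pw (ennreal (e (fst (\<omega> (Suc t))) (fst (snd (\<omega> (Suc t)))))) (\<gamma> ^ t)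
     * eexp (- (ereal (\<gamma> ^ t) * eln (ennreal (m (fst (snd (\<omega> t))) (snd (snd (\<omega> t))) (fst (snd (\<omega> (Suc t))))))))"

definition A :: "nat \<Rightarrow> (nat \<Rightarrow> 's \<times> 'z \<times> 'a) \<Rightarrow> ennreal" where
  "A k \<omega> = (\<Prod>t<k. F t \<omega>)"

definition G :: "nat \<Rightarrow> (nat \<Rightarrow> 's \<times> 'z \<times> 'a) \<Rightarrow> ennreal" where
  "G k \<omega> = A k \<omega> * pw (Q (fst (\<omega> k)) (snd (snd (\<omega> k)))) (\<gamma> ^ k)"

lemma m_meas2: "(\<lambda>(x, z'). m (fst x) (snd x) z') \<in> borel_measurable ((Mz \<Otimes>\<^sub>M Ma) \<Otimes>\<^sub>M Mz)"
  using m_meas' by (simp add: case_prod_beta')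

lemma F_meas: "t < k \<Longrightarrow> F t \<in> borel_measurable (Om k)"
proof -
  assume t: "t < k"
  have c1[measurable]: "(\<lambda>\<omega>. \<omega> t) \<in> Om k \<rightarrow>\<^sub>M X3" by (rule measurable_component_singleton) (use t in simp)
  have c2[measurable]: "(\<lambda>\<omega>. \<omega> (Suc t)) \<in> Om k \<rightarrow>\<^sub>M X3" by (rule measurable_component_singleton) (use t in simp)
  note r_meas[measurable] e_meas[measurable] m_meas2[measurable]
  show ?thesis unfolding F_def by measurable
qed

lemma A_meas: "j \<le> k \<Longrightarrow> A j \<in> borel_measurable (Om k)"
  unfolding A_def by (intro borel_measurable_prod_ennreal F_meas) auto

lemma G_meas: "G k \<in> borel_measurable (Om k)"
proof -
  have c1[measurable]: "(\<lambda>\<omega>. \<omega> k) \<in> Om k \<rightarrow>\<^sub>M X3" by (rule measurable_component_singleton) simp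
  have "(\<lambda>\<omega>. Q (fst (\<omega> k)) (snd (snd (\<omega> k)))) \<in> borel_measurable (Om k)"
    using measurable_compose[OF _ Q_meas, of "\<lambda>\<omega>. (fst (\<omega> k), snd (snd (\<omega> k)))" "Om k"] by simp
  then show ?thesis unfolding G_def using A_meas[of k k] by measurable
qed

lemma int_qstep:
  assumes \<omega>: "\<omega> \<in> space (Om k)" and f: "f \<in> borel_measurable (Om (Suc k))"
  shows "(\<integral>\<^sup>+y. f y \<partial>qstep k \<omega>) = (\<integral>\<^sup>+s'. \<integral>\<^sup>+z'. \<integral>\<^sup>+a'. f (fun_upd \<omega> (Suc k) (s', z', a'))
      \<partial>pol z' \<partial>MK (snd (\<omega> k)) \<partial>PK (fst (\<omega> k), snd (snd (\<omega> k))))"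
proof -
  have "(\<integral>\<^sup>+y. f y \<partial>qstep k \<omega>) = (\<integral>\<^sup>+s'. (\<integral>\<^sup>+y. f y \<partial>(MK (snd (\<omega> k)) \<bind>
      (\<lambda>z'. pol z' \<bind> (\<lambda>a'. return (Om (Suc k)) (fun_upd \<omega> (Suc k) (s', z', a')))))) \<partial>PK (fst (\<omega> k), snd (snd (\<omega> k))))"
    unfolding qstep_def
    by (rule nn_integral_bind[OF f]) (use measurable_prob_algebraD[OF k_inner[OF \<omega>]] in simp)
  also have "\<dots> = (\<integral>\<^sup>+s'. \<integral>\<^sup>+z'. \<integral>\<^sup>+a'. f (fun_upd \<omega> (Suc k) (s', z', a'))
      \<partial>pol z' \<partial>MK (snd (\<omega> k)) \<partial>PK (fst (\<omega> k), snd (snd (\<omega> k))))"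
  proof (rule nn_integral_cong)
    fix s' assume "s' \<in> space (PK (fst (\<omega> k), snd (snd (\<omega> k))))"
    then have s': "s' \<in> space Ms" by simp
    have u: "(\<lambda>y. fun_upd \<omega> (Suc k) (s', fst y, snd y)) \<in> Mz \<Otimes>\<^sub>M Ma \<rightarrow>\<^sub>M Om (Suc k)"
      by (rule measurable_compose[OF _ upd_meas[OF \<omega>]]) (use s' in measurable)
    have r1: "(\<lambda>(z', a'). return (Om (Suc k)) (fun_upd \<omega> (Suc k) (s', z', a'))) \<in> Mz \<Otimes>\<^sub>M Ma \<rightarrow>\<^sub>M prob_algebra (Om (Suc k))"
      using measurable_compose[OF u measurable_return_prob_space] by (simp add: case_prod_beta')
    have k2: "(\<lambda>z'. pol z' \<bind> (\<lambda>a'. return (Om (Suc k)) (fun_upd \<omega> (Suc k) (s', z', a')))) \<in> Mz \<rightarrow>\<^sub>M subprob_algebra (Om (Suc k))"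
      by (rule measurable_prob_algebraD, rule measurable_bind_prob_space2[OF pol_kernel r1])
    have "(\<integral>\<^sup>+y. f y \<partial>(MK (snd (\<omega> k)) \<bind> (\<lambda>z'. pol z' \<bind> (\<lambda>a'. return (Om (Suc k)) (fun_upd \<omega> (Suc k) (s', z', a'))))))
        = (\<integral>\<^sup>+z'. (\<integral>\<^sup>+y. f y \<partial>(pol z' \<bind> (\<lambda>a'. return (Om (Suc k)) (fun_upd \<omega> (Suc k) (s', z', a'))))) \<partial>MK (snd (\<omega> k)))"
      by (rule nn_integral_bind[OF f]) (use k2 in simp)
    also have "\<dots> = (\<integral>\<^sup>+z'. \<integral>\<^sup>+a'. f (fun_upd \<omega> (Suc k) (s', z', a')) \<partial>pol z' \<partial>MK (snd (\<omega> k)))"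
    proof (rule nn_integral_cong)
      fix z' assume "z' \<in> space (MK (snd (\<omega> k)))"
      then have z': "z' \<in> space Mz" by simp
      have r0: "(\<lambda>a'. return (Om (Suc k)) (fun_upd \<omega> (Suc k) (s', z', a'))) \<in> Ma \<rightarrow>\<^sub>M subprob_algebra (Om (Suc k))"
        by (rule measurable_compose[OF _ return_measurable], rule measurable_compose[OF _ upd_meas[OF \<omega>]])
           (use s' z' in measurable)
      have "(\<integral>\<^sup>+y. f y \<partial>(pol z' \<bind> (\<lambda>a'. return (Om (Suc k)) (fun_upd \<omega> (Suc k) (s', z', a')))))
          = (\<integral>\<^sup>+a'. (\<integral>\<^sup>+y. f y \<partial>return (Om (Suc k)) (fun_upd \<omega> (Suc k) (s', z', a'))) \<partial>pol z')"
        by (rule nn_integral_bind[OF f]) (use r0 in \<open>simp add: measurable_cong_sets[OF sets_pol[OF z'] refl]\<close>)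
      also have "\<dots> = (\<integral>\<^sup>+a'. f (fun_upd \<omega> (Suc k) (s', z', a')) \<partial>pol z')"
      proof (rule nn_integral_cong)
        fix a' assume "a' \<in> space (pol z')"
        then have a': "a' \<in> space Ma" using sets_eq_imp_space_eq[OF sets_pol[OF z']] by simp
        have "fun_upd \<omega> (Suc k) (s', z', a') \<in> space (Om (Suc k))"
          using measurable_space[OF upd_meas[OF \<omega>], of "(s', z', a')"] s' z' a' by (simp add: space_pair_measure)
        from nn_integral_return[OF this f]
        show "(\<integral>\<^sup>+y. f y \<partial>return (Om (Suc k)) (fun_upd \<omega> (Suc k) (s', z', a'))) = f (fun_upd \<omega> (Suc k) (s', z', a'))" .
      qed
      finally show "(\<integral>\<^sup>+y. f y \<partial>(pol z' \<bind> (\<lambda>a'. return (Om (Suc k)) (fun_upd \<omega> (Suc k) (s', z', a')))))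
          = (\<integral>\<^sup>+a'. f (fun_upd \<omega> (Suc k) (s', z', a')) \<partial>pol z')" .
    qed
    finally show "(\<integral>\<^sup>+y. f y \<partial>(MK (snd (\<omega> k)) \<bind> (\<lambda>z'. pol z' \<bind> (\<lambda>a'. return (Om (Suc k)) (fun_upd \<omega> (Suc k) (s', z', a'))))))
        = (\<integral>\<^sup>+z'. \<integral>\<^sup>+a'. f (fun_upd \<omega> (Suc k) (s', z', a')) \<partial>pol z' \<partial>MK (snd (\<omega> k)))" .
  qed
  finally show ?thesis .
qed

lemma A_upd: "A k (fun_upd \<omega> (Suc k) x) = A k \<omega>"
  unfolding A_def F_def by (intro prod.cong) auto

lemma G_upd: "G (Suc k) (fun_upd \<omega> (Suc k) (s', z', a')) = A k \<omega> *
   (pw (ennreal (r (fst (\<omega> k)) (snd (snd (\<omega> k))))) (\<gamma> ^ k * (1 - \<gamma>)) * pw (ennreal (e s' z')) (\<gamma> ^ k)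
     * eexp (-(ereal (\<gamma> ^ k) * eln (ennreal (m (fst (snd (\<omega> k))) (snd (snd (\<omega> k))) z')))) * pw (Q s' a') (\<gamma> * \<gamma> ^ k))"
proof -
  have "A (Suc k) (fun_upd \<omega> (Suc k) (s', z', a')) = A k \<omega> * F k (fun_upd \<omega> (Suc k) (s', z', a'))"
    using A_upd[of k \<omega>] by (simp add: A_def)
  then show ?thesis unfolding G_def by (simp add: F_def mult.assoc)
qed

definition H :: "nat \<Rightarrow> (nat \<Rightarrow> 's \<times> 'z \<times> 'a) \<Rightarrow> ennreal" where
  "H k y = F k y * pw (Q (fst (y (Suc k))) (snd (snd (y (Suc k))))) (\<gamma> ^ Suc k)"

lemma H_meas: "H k \<in> borel_measurable (Om (Suc k))"
proof -
  have c1[measurable]: "(\<lambda>\<omega>. \<omega> (Suc k)) \<in> Om (Suc k) \<rightarrow>\<^sub>M X3" by (rule measurable_component_singleton) simp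
  have "(\<lambda>\<omega>. Q (fst (\<omega> (Suc k))) (snd (snd (\<omega> (Suc k))))) \<in> borel_measurable (Om (Suc k))"
    using measurable_compose[OF _ Q_meas, of "\<lambda>\<omega>. (fst (\<omega> (Suc k)), snd (snd (\<omega> (Suc k))))" "Om (Suc k)"] by simp
  then show ?thesis unfolding H_def using F_meas[of k "Suc k"] by measurable
qed

lemma GH: "G (Suc k) y = A k y * H k y"
  by (simp add: G_def H_def A_def mult.assoc)

lemma step_bound:
  assumes \<omega>: "\<omega> \<in> space (Om k)"
  shows "(\<integral>\<^sup>+y. G (Suc k) y \<partial>qstep k \<omega>) \<le> G k \<omega>"
proof -
  have wk: "\<omega> k \<in> space X3" using \<omega> by (auto simp: space_PiM)
  have Gm: "G (Suc k) \<in> borel_measurable (Om (Suc k))" by (rule G_meas)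
  have AHm: "(\<lambda>y. A k \<omega> * H k y) \<in> borel_measurable (Om (Suc k))" using H_meas by measurable
  have "(\<integral>\<^sup>+y. G (Suc k) y \<partial>qstep k \<omega>) = (\<integral>\<^sup>+y. A k \<omega> * H k y \<partial>qstep k \<omega>)"
    unfolding int_qstep[OF \<omega> Gm] int_qstep[OF \<omega> AHm] unfolding GH A_upd ..
  also have "\<dots> = A k \<omega> * (\<integral>\<^sup>+y. H k y \<partial>qstep k \<omega>)"
  proof -
    have "sets (qstep k \<omega>) = sets (Om (Suc k))"
      using measurable_space[OF k_qstep \<omega>] by (simp add: space_prob_algebra)
    then have hm: "H k \<in> borel_measurable (qstep k \<omega>)"
      using H_meas measurable_cong_sets[of "qstep k \<omega>" "Om (Suc k)" borel borel] by simp
    show ?thesis by (rule nn_integral_cmult[OF hm])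
  qed
  also have "(\<integral>\<^sup>+y. H k y \<partial>qstep k \<omega>) \<le> pw (Q (fst (\<omega> k)) (snd (snd (\<omega> k)))) (\<gamma> ^ k)"
  proof -
    have "(\<integral>\<^sup>+y. H k y \<partial>qstep k \<omega>) =
       (\<integral>\<^sup>+s'. \<integral>\<^sup>+z'. \<integral>\<^sup>+a'. pw (ennreal (r (fst (\<omega> k)) (snd (snd (\<omega> k))))) (\<gamma> ^ k * (1 - \<gamma>)) * pw (ennreal (e s' z')) (\<gamma> ^ k)
             * eexp (-(ereal (\<gamma> ^ k) * eln (ennreal (m (fst (snd (\<omega> k))) (snd (snd (\<omega> k))) z')))) * pw (Q s' a') (\<gamma> * \<gamma> ^ k)
           \<partial>pol z' \<partial>MK (fst (snd (\<omega> k)), snd (snd (\<omega> k))) \<partial>PK (fst (\<omega> k), snd (snd (\<omega> k))))"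
      unfolding int_qstep[OF \<omega> H_meas] by (simp add: H_def F_def)
    also have "\<dots> \<le> pw (Q (fst (\<omega> k)) (snd (snd (\<omega> k)))) (\<gamma> ^ k)"
      by (rule one_step) (use wk gamma0 gamma1 in \<open>auto simp: space_pair_measure power_le_one\<close>)
    finally show ?thesis .
  qed
  then have "A k \<omega> * (\<integral>\<^sup>+y. H k y \<partial>qstep k \<omega>) \<le> A k \<omega> * pw (Q (fst (\<omega> k)) (snd (snd (\<omega> k)))) (\<gamma> ^ k)"
    by (rule mult_left_mono) simp
  finally show ?thesis by (simp add: G_def)
qed

lemma k0: "(\<lambda>s. EK s \<bind> (\<lambda>z. pol z \<bind> (\<lambda>a. return (Om 0) (\<lambda>i\<in>{..0::nat}. (s, z, a))))) \<in> Ms \<rightarrow>\<^sub>M prob_algebra (Om 0)"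
proof -
  have u: "(\<lambda>y. \<lambda>i\<in>{..0::nat}. (fst (fst y), snd (fst y), snd y)) \<in> (Ms \<Otimes>\<^sub>M Mz) \<Otimes>\<^sub>M Ma \<rightarrow>\<^sub>M Om 0"
    by measurable
  have r1: "(\<lambda>y. return (Om 0) (\<lambda>i\<in>{..0::nat}. (fst (fst y), snd (fst y), snd y))) \<in> (Ms \<Otimes>\<^sub>M Mz) \<Otimes>\<^sub>M Ma \<rightarrow>\<^sub>M prob_algebra (Om 0)"
    by (rule measurable_compose[OF u measurable_return_prob_space])
  have r2: "(\<lambda>y. pol (snd y) \<bind> (\<lambda>a. return (Om 0) (\<lambda>i\<in>{..0::nat}. (fst y, snd y, a)))) \<in> Ms \<Otimes>\<^sub>M Mz \<rightarrow>\<^sub>M prob_algebra (Om 0)"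
    by (rule measurable_bind_prob_space2[OF measurable_compose[OF measurable_snd pol_kernel]])
       (use r1 in \<open>simp add: case_prod_beta'\<close>)
  show ?thesis
    by (rule measurable_bind_prob_space2[OF kE]) (use r2 in \<open>simp add: case_prod_beta'\<close>)
qed

lemma base_eq: "(\<integral>\<^sup>+\<omega>. G 0 \<omega> \<partial>q 0) = (\<integral>\<^sup>+x. Q (fst x) (snd x) \<partial>init)"
proof -
  have G0m: "G 0 \<in> borel_measurable (Om 0)" by (rule G_meas)
  have inner: "(\<integral>\<^sup>+\<omega>. G 0 \<omega> \<partial>(EK s \<bind> (\<lambda>z. pol z \<bind> (\<lambda>a. return (Om 0) (\<lambda>i\<in>{..0::nat}. (s, z, a)))))) = G2 s"
    if s: "s \<in> space Ms" for s
  proof -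
    have r0: "(\<lambda>(z, a). return (Om 0) (\<lambda>i\<in>{..0::nat}. (s, z, a))) \<in> Mz \<Otimes>\<^sub>M Ma \<rightarrow>\<^sub>M prob_algebra (Om 0)"
    proof -
      have "(\<lambda>y. return (Om 0) (\<lambda>i\<in>{..0::nat}. (s, fst y, snd y))) \<in> Mz \<Otimes>\<^sub>M Ma \<rightarrow>\<^sub>M prob_algebra (Om 0)"
        by (rule measurable_compose[OF _ measurable_return_prob_space]) (use s in measurable)
      then show ?thesis by (simp add: case_prod_beta')
    qed
    have k2: "(\<lambda>z. pol z \<bind> (\<lambda>a. return (Om 0) (\<lambda>i\<in>{..0::nat}. (s, z, a)))) \<in> Mz \<rightarrow>\<^sub>M subprob_algebra (Om 0)"
      by (rule measurable_prob_algebraD, rule measurable_bind_prob_space2[OF pol_kernel r0])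
    have "(\<integral>\<^sup>+\<omega>. G 0 \<omega> \<partial>(EK s \<bind> (\<lambda>z. pol z \<bind> (\<lambda>a. return (Om 0) (\<lambda>i\<in>{..0::nat}. (s, z, a))))))
        = (\<integral>\<^sup>+z. (\<integral>\<^sup>+\<omega>. G 0 \<omega> \<partial>(pol z \<bind> (\<lambda>a. return (Om 0) (\<lambda>i\<in>{..0::nat}. (s, z, a))))) \<partial>EK s)"
      by (rule nn_integral_bind[OF G0m]) (use k2 in simp)
    also have "\<dots> = (\<integral>\<^sup>+z. Hf s z \<partial>EK s)"
    proof (rule nn_integral_cong)
      fix z assume "z \<in> space (EK s)"
      then have z: "z \<in> space Mz" by simp
      have r1: "(\<lambda>a. return (Om 0) (\<lambda>i\<in>{..0::nat}. (s, z, a))) \<in> Ma \<rightarrow>\<^sub>M subprob_algebra (Om 0)"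
        by (rule measurable_compose[OF _ return_measurable]) (use s z in measurable)
      have "(\<integral>\<^sup>+\<omega>. G 0 \<omega> \<partial>(pol z \<bind> (\<lambda>a. return (Om 0) (\<lambda>i\<in>{..0::nat}. (s, z, a)))))
          = (\<integral>\<^sup>+a. (\<integral>\<^sup>+\<omega>. G 0 \<omega> \<partial>return (Om 0) (\<lambda>i\<in>{..0::nat}. (s, z, a))) \<partial>pol z)"
        by (rule nn_integral_bind[OF G0m]) (use r1 in \<open>simp add: measurable_cong_sets[OF sets_pol[OF z] refl]\<close>)
      also have "\<dots> = Hf s z"
        unfolding Hf_def
      proof (rule nn_integral_cong)
        fix a assume "a \<in> space (pol z)"
        then have a: "a \<in> space Ma" using sets_eq_imp_space_eq[OF sets_pol[OF z]] by simp
        have "(\<lambda>i\<in>{..0::nat}. (s, z, a)) \<in> space (Om 0)"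
          using s z a by (simp add: space_PiM space_pair_measure)
        from nn_integral_return[OF this G0m]
        show "(\<integral>\<^sup>+\<omega>. G 0 \<omega> \<partial>return (Om 0) (\<lambda>i\<in>{..0::nat}. (s, z, a))) = Q s a"
          by (simp add: G_def A_def)
      qed
      finally show "(\<integral>\<^sup>+\<omega>. G 0 \<omega> \<partial>(pol z \<bind> (\<lambda>a. return (Om 0) (\<lambda>i\<in>{..0::nat}. (s, z, a))))) = Hf s z" .
    qed
    finally show ?thesis by (simp add: G2_def)
  qed
  have "(\<integral>\<^sup>+\<omega>. G 0 \<omega> \<partial>q 0) = (\<integral>\<^sup>+s. (\<integral>\<^sup>+\<omega>. G 0 \<omega> \<partial>(EK s \<bind> (\<lambda>z. pol z \<bind> (\<lambda>a. return (Om 0) (\<lambda>i\<in>{..0::nat}. (s, z, a)))))) \<partial>density Ms (\<lambda>s. ennreal (p0 s)))"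
    by (simp only: q_traj.simps, rule nn_integral_bind[OF G0m]) (use measurable_prob_algebraD[OF k0] in simp)
  also have "\<dots> = (\<integral>\<^sup>+s. G2 s \<partial>density Ms (\<lambda>s. ennreal (p0 s)))"
    by (rule nn_integral_cong) (rule inner, simp)
  also have "\<dots> = (\<integral>\<^sup>+s. (\<integral>\<^sup>+x. Q (fst x) (snd x) \<partial>rest s) \<partial>density Ms (\<lambda>s. ennreal (p0 s)))"
    by (rule nn_integral_cong) (simp add: int_rest)
  also have "\<dots> = (\<integral>\<^sup>+x. Q (fst x) (snd x) \<partial>init)"
    unfolding init_eq by (rule nn_integral_bind[OF Q_meas, symmetric]) (simp add: k_rest')
  finally show ?thesis .
qed

lemma main_ind: "(\<integral>\<^sup>+\<omega>. G k \<omega> \<partial>q k) \<le> (\<integral>\<^sup>+x. Q (fst x) (snd x) \<partial>init)"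
proof (induction k)
  case 0 then show ?case by (rule eq_refl[OF base_eq])
next
  case (Suc k)
  have "(\<integral>\<^sup>+\<omega>. G (Suc k) \<omega> \<partial>q (Suc k)) = (\<integral>\<^sup>+\<omega>. (\<integral>\<^sup>+y. G (Suc k) y \<partial>qstep k \<omega>) \<partial>q k)"
    unfolding q_Suc
    by (rule nn_integral_bind[OF G_meas]) (simp add: measurable_cong_sets[OF sets_q refl] measurable_prob_algebraD[OF k_qstep])
  also have "\<dots> \<le> (\<integral>\<^sup>+\<omega>. G k \<omega> \<partial>q k)"
    by (rule nn_integral_mono) (use sets_eq_imp_space_eq[OF sets_q] step_bound in auto)
  finally show ?case using Suc by simp
qed

end



definition lplus :: "ereal \<Rightarrow> ereal \<Rightarrow> ereal" where
  "lplus a b = (if a = -\<infinity> \<or> b = -\<infinity> then -\<infinity> else a + b)"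

lemma sum_list_not_minf: "-\<infinity> \<notin> set xs \<Longrightarrow> sum_list (xs :: ereal list) \<noteq> -\<infinity>"
  by (induction xs) (auto simp: zero_ereal_def)

lemma lsum_Nil: "lsum [] = 0"
  by (simp add: lsum_def)

lemma lsum_append: "lsum (xs @ ys) = lplus (lsum xs) (lsum ys)"
  using sum_list_not_minf[of xs] sum_list_not_minf[of ys]
  by (auto simp: lsum_def lplus_def)

lemma lsum_Cons: "lsum (x # xs) = lplus x (lsum xs)"
  using lsum_append[of "[x]" xs] by (simp add: lsum_def)

lemma lplus_meas[measurable (raw)]:
  assumes f[measurable]: "f \<in> borel_measurable M" and g[measurable]: "g \<in> borel_measurable M"
  shows "(\<lambda>x. lplus (f x) (g x)) \<in> borel_measurable M"
proof -
  have "{-\<infinity>::ereal} \<in> sets borel" by (rule borel_closed) simp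
  then have "f -` {-\<infinity>} \<inter> space M \<in> sets M" "g -` {-\<infinity>} \<inter> space M \<in> sets M"
    using measurable_sets[OF f] measurable_sets[OF g] by auto
  then have "(f -` {-\<infinity>} \<inter> space M) \<union> (g -` {-\<infinity>} \<inter> space M) \<in> sets M" by auto
  moreover have "{x \<in> space M. f x = - \<infinity> \<or> g x = - \<infinity>} = (f -` {-\<infinity>} \<inter> space M) \<union> (g -` {-\<infinity>} \<inter> space M)"
    by auto
  ultimately have [measurable]: "Measurable.pred M (\<lambda>x. f x = - \<infinity> \<or> g x = - \<infinity>)"
    unfolding pred_def by simp
  show ?thesis unfolding lplus_def by measurable
qed

lemma lsum_concat_meas:
  assumes "\<And>t. t < K \<Longrightarrow> (\<lambda>x. lsum (g t x)) \<in> borel_measurable M"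
  shows "(\<lambda>x. lsum (concat (map (\<lambda>t. g t x) [0..<K]))) \<in> borel_measurable M"
  using assms
proof (induction K)
  case 0 then show ?case by (simp add: lsum_Nil)
next
  case (Suc K)
  have "(\<lambda>x. lplus (lsum (concat (map (\<lambda>t. g t x) [0..<K]))) (lsum (g K x))) \<in> borel_measurable M"
    using Suc by (intro lplus_meas) auto
  then show ?case by (simp add: lsum_append)
qed

lemma prod_list_concat: "prod_list (map f (concat (map g [0..<K]))) = (\<Prod>t<K. prod_list (map f (g t)))"
  by (induction K) (auto simp: lessThan_Suc mult.commute)

context mdp
begin

lemma eexp_LK: "eexp (LK_integrand \<gamma> r e m Q K \<omega>) = G K \<omega>"
  unfolding LK_integrand_def Let_def eexp_lsum
  by (simp add: prod_list_concat G_def A_def F_def pw_def mult.assoc)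

lemma LK_meas: "LK_integrand \<gamma> r e m Q K \<in> borel_measurable (Om K)"
proof -
  note r_meas[measurable] e_meas[measurable] m_meas2[measurable]
  have ct: "(\<lambda>\<omega>. lsum [ereal (\<gamma> ^ t * (1 - \<gamma>)) * eln (ennreal (r (fst (\<omega> t)) (snd (snd (\<omega> t))))),
           ereal (\<gamma> ^ t) * eln (ennreal (e (fst (\<omega> (Suc t))) (fst (snd (\<omega> (Suc t)))))),
           - (ereal (\<gamma> ^ t) * eln (ennreal (m (fst (snd (\<omega> t))) (snd (snd (\<omega> t))) (fst (snd (\<omega> (Suc t))))))) ])
      \<in> borel_measurable (Om K)" if t: "t < K" for t
  proof -
    have c1[measurable]: "(\<lambda>\<omega>. \<omega> t) \<in> Om K \<rightarrow>\<^sub>M X3" by (rule measurable_component_singleton) (use t in simp)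
    have c2[measurable]: "(\<lambda>\<omega>. \<omega> (Suc t)) \<in> Om K \<rightarrow>\<^sub>M X3" by (rule measurable_component_singleton) (use t in simp)
    show ?thesis by (simp only: lsum_Cons lsum_Nil) measurable
  qed
  have cK[measurable]: "(\<lambda>\<omega>. \<omega> K) \<in> Om K \<rightarrow>\<^sub>M X3" by (rule measurable_component_singleton) simp
  have qK[measurable]: "(\<lambda>\<omega>. Q (fst (\<omega> K)) (snd (snd (\<omega> K)))) \<in> borel_measurable (Om K)"
    using measurable_compose[OF _ Q_meas, of "\<lambda>\<omega>. (fst (\<omega> K), snd (snd (\<omega> K)))" "Om K"] by simp
  have "(\<lambda>\<omega>. lplus (lsum (concat (map (\<lambda>t. [ereal (\<gamma> ^ t * (1 - \<gamma>)) * eln (ennreal (r (fst (\<omega> t)) (snd (snd (\<omega> t))))),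
           ereal (\<gamma> ^ t) * eln (ennreal (e (fst (\<omega> (Suc t))) (fst (snd (\<omega> (Suc t)))))),
           - (ereal (\<gamma> ^ t) * eln (ennreal (m (fst (snd (\<omega> t))) (snd (snd (\<omega> t))) (fst (snd (\<omega> (Suc t))))))) ]) [0..<K])))
       (lsum [ereal (\<gamma> ^ K) * eln (Q (fst (\<omega> K)) (snd (snd (\<omega> K))))])) \<in> borel_measurable (Om K)"
    apply (rule lplus_meas)
     apply (rule lsum_concat_meas[where g="\<lambda>t \<omega>. [ereal (\<gamma> ^ t * (1 - \<gamma>)) * eln (ennreal (r (fst (\<omega> t)) (snd (snd (\<omega> t))))),
           ereal (\<gamma> ^ t) * eln (ennreal (e (fst (\<omega> (Suc t))) (fst (snd (\<omega> (Suc t)))))),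
           - (ereal (\<gamma> ^ t) * eln (ennreal (m (fst (snd (\<omega> t))) (snd (snd (\<omega> t))) (fst (snd (\<omega> (Suc t))))))) ]", OF ct])
     apply assumption
    apply (simp only: lsum_Cons lsum_Nil)
    apply measurable
    done
  then show ?thesis
    unfolding LK_integrand_def Let_def lsum_append by simp
qed

end

theorem theorem1:
  fixes \<gamma> :: real and K :: nat
    and Ms :: "'s measure" and Ma :: "'a measure" and Mz :: "'z measure"
    and p0 :: "'s \<Rightarrow> real" and p :: "'s \<Rightarrow> 'a \<Rightarrow> 's \<Rightarrow> real"
    and r :: "'s \<Rightarrow> 'a \<Rightarrow> real"
    and e :: "'s \<Rightarrow> 'z \<Rightarrow> real" and m :: "'z \<Rightarrow> 'a \<Rightarrow> 'z \<Rightarrow> real"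
    and pol :: "'z \<Rightarrow> 'a measure"
  assumes gamma: "0 \<le> \<gamma>" "\<gamma> < 1"
    and sfS: "sigma_finite_measure Ms" and sfZ: "sigma_finite_measure Mz"
    and p0_meas: "p0 \<in> borel_measurable Ms"
    and p0_nonneg: "\<And>s. s \<in> space Ms \<Longrightarrow> 0 \<le> p0 s"
    and p0_norm: "(\<integral>\<^sup>+ s. ennreal (p0 s) \<partial>Ms) = 1"
    and p_meas: "(\<lambda>(s, a, s'). p s a s') \<in> borel_measurable (Ms \<Otimes>\<^sub>M (Ma \<Otimes>\<^sub>M Ms))"
    and p_nonneg: "\<And>s a s'. s \<in> space Ms \<Longrightarrow> a \<in> space Ma \<Longrightarrow> s' \<in> space Ms \<Longrightarrow> 0 \<le> p s a s'"
    and p_norm: "\<And>s a. s \<in> space Ms \<Longrightarrow> a \<in> space Ma \<Longrightarrow> (\<integral>\<^sup>+ s'. ennreal (p s a s') \<partial>Ms) = 1"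
    and r_meas: "(\<lambda>(s, a). r s a) \<in> borel_measurable (Ms \<Otimes>\<^sub>M Ma)"
    and r_nonneg: "\<And>s a. s \<in> space Ms \<Longrightarrow> a \<in> space Ma \<Longrightarrow> 0 \<le> r s a"
    and e_meas: "(\<lambda>(s, z). e s z) \<in> borel_measurable (Ms \<Otimes>\<^sub>M Mz)"
    and e_nonneg: "\<And>s z. s \<in> space Ms \<Longrightarrow> z \<in> space Mz \<Longrightarrow> 0 \<le> e s z"
    and e_norm: "\<And>s. s \<in> space Ms \<Longrightarrow> (\<integral>\<^sup>+ z. ennreal (e s z) \<partial>Mz) = 1"
    and m_meas: "(\<lambda>(z, a, z'). m z a z') \<in> borel_measurable (Mz \<Otimes>\<^sub>M (Ma \<Otimes>\<^sub>M Mz))"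
    and m_nonneg: "\<And>z a z'. z \<in> space Mz \<Longrightarrow> a \<in> space Ma \<Longrightarrow> z' \<in> space Mz \<Longrightarrow> 0 \<le> m z a z'"
    and m_norm: "\<And>z a. z \<in> space Mz \<Longrightarrow> a \<in> space Ma \<Longrightarrow> (\<integral>\<^sup>+ z'. ennreal (m z a z') \<partial>Mz) = 1"
    and pol_kernel: "pol \<in> measurable Mz (prob_algebra Ma)"
    and LK_defined:
      "let f = LK_integrand \<gamma> r e m (Qfun \<gamma> r Ms Ma Mz p e pol) K;
           q = q_traj Ms Ma Mz p0 p e m pol K
       in epos q f \<noteq> \<infinity> \<or> eneg q f \<noteq> \<infinity>"
  shows "ennreal (1 / (1 - \<gamma>)) *
           eexp (eexpect (q_traj Ms Ma Mz p0 p e m pol K)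
                   (LK_integrand \<gamma> r e m (Qfun \<gamma> r Ms Ma Mz p e pol) K))
         \<le> true_return \<gamma> r Ms Ma Mz p0 p e pol"
proof -
  interpret mdp \<gamma> Ms Ma Mz p0 p r e m pol
    by (intro mdp.intro) (simp_all add: gamma sfS sfZ p0_meas p0_norm p_meas p_norm r_meas e_meas e_norm m_meas m_norm pol_kernel)
  define f where "f = LK_integrand \<gamma> r e m (Qfun \<gamma> r Ms Ma Mz p e pol) K"
  have fm: "f \<in> borel_measurable (q K)"
    unfolding f_def measurable_cong_sets[OF sets_q refl] by (rule LK_meas)
  have "eexp (eexpect (q K) f) \<le> (\<integral>\<^sup>+\<omega>. eexp (f \<omega>) \<partial>q K)"
    by (rule jensen_exp[OF prob_q fm]) (use LK_defined in \<open>simp add: Let_def f_def\<close>)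
  also have "\<dots> = (\<integral>\<^sup>+\<omega>. G K \<omega> \<partial>q K)"
    by (simp add: f_def eexp_LK)
  also have "\<dots> \<le> (\<integral>\<^sup>+x. Q (fst x) (snd x) \<partial>init)"
    by (rule main_ind)
  also have "\<dots> = ennreal (1 - \<gamma>) * (\<integral>\<^sup>+x. S x \<partial>init)"
  proof -
    have "S \<in> borel_measurable init"
      unfolding measurable_cong_sets[OF sets_init refl] by (rule S_meas)
    then show ?thesis by (simp add: Q_S nn_integral_cmult)
  qed
  finally have E: "eexp (eexpect (q K) f) \<le> ennreal (1 - \<gamma>) * (\<integral>\<^sup>+x. S x \<partial>init)" .
  have "ennreal (1 / (1 - \<gamma>)) * eexp (eexpect (q K) f) \<le> ennreal (1 / (1 - \<gamma>)) * (ennreal (1 - \<gamma>) * (\<integral>\<^sup>+x. S x \<partial>init))"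
    by (rule mult_left_mono[OF E]) simp
  also have "\<dots> = (\<integral>\<^sup>+x. S x \<partial>init)"
  proof -
    have "ennreal (1 / (1 - \<gamma>)) * ennreal (1 - \<gamma>) = 1"
      using gamma by (simp add: ennreal_mult[symmetric])
    then show ?thesis by (simp add: mult.assoc[symmetric])
  qed
  also have "\<dots> = true_return \<gamma> r Ms Ma Mz p0 p e pol"
    by (rule true_return_eq[symmetric])
  finally show ?thesis unfolding f_def .
qed


end
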